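(* Let $G$ be a connected finite simple graph. Then $G$ is a bridgeless chordal graph without $K_5$-minor if and only if $G$ is obtained from copies of $K_3$ and $K_4$ by successive $0$-sums, $1$-sums and $2$-sums.
   Context: $K_n$ denotes the complete graph on $n$ vertices. A graph is chordal if it has no induced (chordless) cycle of length $\geq 4$. An edge is a bridge if no cycle contains it; bridgeless means no edge is a bridge. A minor of $G$ is a graph obtained by a sequence of edge deletions, edge contractions (removing resulting multiple edges) and vertex deletions. If $G_1=(V_1,E_1)$ and $G_2=(V_2,E_2)$ are graphs such that $V_1\cap V_2$ is a clique in both, their clique sum is the graph with vertex set $V_1\cup V_2$ and edge set $E_1\cup E_2$; it is called a $k$-sum if $|V_1\cap V_2|=k+1$. *)

theory Defs
  imports Main
begin

definition simple_graph :: "'a set \<Rightarrow> 'a set set \<Rightarrow> bool" where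
  "simple_graph V E \<longleftrightarrow> finite V \<and> (\<forall>e\<in>E. \<exists>u v. u \<in> V \<and> v \<in> V \<and> u \<noteq> v \<and> e = {u, v})"

definition connected_graph :: "'a set \<Rightarrow> 'a set set \<Rightarrow> bool" where
  "connected_graph V E \<longleftrightarrow> V \<noteq> {} \<and>
     (\<forall>u\<in>V. \<forall>v\<in>V. (u, v) \<in> {(x, y). {x, y} \<in> E}\<^sup>*)"

definition is_cycle :: "'a set \<Rightarrow> 'a set set \<Rightarrow> 'a list \<Rightarrow> bool" where
  "is_cycle V E cs \<longleftrightarrow> length cs \<ge> 3 \<and> distinct cs \<and> set cs \<subseteq> V \<and>
     (\<forall>i < length cs. {cs ! i, cs ! ((i + 1) mod length cs)} \<in> E)"

definition cycle_edges :: "'a list \<Rightarrow> 'a set set" where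
  "cycle_edges cs = {{cs ! i, cs ! ((i + 1) mod length cs)} | i. i < length cs}"

definition is_bridge :: "'a set \<Rightarrow> 'a set set \<Rightarrow> 'a set \<Rightarrow> bool" where
  "is_bridge V E e \<longleftrightarrow> e \<in> E \<and> \<not> (\<exists>cs. is_cycle V E cs \<and> e \<in> cycle_edges cs)"

definition bridgeless :: "'a set \<Rightarrow> 'a set set \<Rightarrow> bool" where
  "bridgeless V E \<longleftrightarrow> (\<forall>e\<in>E. \<not> is_bridge V E e)"

definition chordal :: "'a set \<Rightarrow> 'a set set \<Rightarrow> bool" where
  "chordal V E \<longleftrightarrow> \<not> (\<exists>cs. is_cycle V E cs \<and> length cs \<ge> 4 \<and>
      (\<forall>x\<in>set cs. \<forall>y\<in>set cs. {x, y} \<in> E \<longrightarrow> {x, y} \<in> cycle_edges cs))"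

text \<open>One minor operation: edge deletion, vertex deletion, or contraction of an edge {u,v}
  (the merged vertex keeps the name u; multiple edges are identified automatically).\<close>

inductive minor_step :: "'a set \<times> 'a set set \<Rightarrow> 'a set \<times> 'a set set \<Rightarrow> bool" where
  del_edge: "e \<in> E \<Longrightarrow> minor_step (V, E) (V, E - {e})"
| del_vertex: "v \<in> V \<Longrightarrow> minor_step (V, E) (V - {v}, {e \<in> E. v \<notin> e})"
| contract: "{u, v} \<in> E \<Longrightarrow> u \<noteq> v \<Longrightarrow>
    minor_step (V, E) (V - {v}, {e \<in> E. v \<notin> e} \<union> {{u, w} | w. {v, w} \<in> E \<and> w \<noteq> u})"

definition is_minor :: "'a set \<times> 'a set set \<Rightarrow> 'a set \<times> 'a set set \<Rightarrow> bool" where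
  "is_minor H G \<longleftrightarrow> minor_step\<^sup>*\<^sup>* G H"

definition complete_graph :: "'a set \<Rightarrow> 'a set set \<Rightarrow> bool" where
  "complete_graph V E \<longleftrightarrow> E = {{u, v} | u v. u \<in> V \<and> v \<in> V \<and> u \<noteq> v}"

definition has_K_minor :: "nat \<Rightarrow> 'a set \<Rightarrow> 'a set set \<Rightarrow> bool" where
  "has_K_minor n V E \<longleftrightarrow> (\<exists>V' E'. is_minor (V', E') (V, E) \<and> finite V' \<and> card V' = n \<and>
      complete_graph V' E')"

definition is_clique :: "'a set \<Rightarrow> 'a set set \<Rightarrow> 'a set \<Rightarrow> bool" where
  "is_clique V E S \<longleftrightarrow> S \<subseteq> V \<and> (\<forall>u\<in>S. \<forall>v\<in>S. u \<noteq> v \<longrightarrow> {u, v} \<in> E)"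

text \<open>Graphs obtained from copies of K3 and K4 by successive 0-, 1- and 2-sums
  (a k-sum glues along a common clique of size k+1).\<close>

inductive k34_sum :: "'a set \<Rightarrow> 'a set set \<Rightarrow> bool" where
  base: "finite V \<Longrightarrow> card V \<in> {3, 4} \<Longrightarrow> complete_graph V E \<Longrightarrow> k34_sum V E"
| csum: "k34_sum V1 E1 \<Longrightarrow> k34_sum V2 E2 \<Longrightarrow>
    is_clique V1 E1 (V1 \<inter> V2) \<Longrightarrow> is_clique V2 E2 (V1 \<inter> V2) \<Longrightarrow>
    card (V1 \<inter> V2) \<in> {1, 2, 3} \<Longrightarrow> k34_sum (V1 \<union> V2) (E1 \<union> E2)"

end

theory Submission
  imports Defs "HOL-Number_Theory.Cong"
begin


definition rel :: "'a set set \<Rightarrow> 'a set \<Rightarrow> ('a \<times> 'a) set" where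
  "rel E B = {(x,y). {x,y} \<in> E \<and> x \<in> B \<and> y \<in> B}"

definition connset :: "'a set set \<Rightarrow> 'a set \<Rightarrow> bool" where
  "connset E B \<longleftrightarrow> (\<forall>x\<in>B. \<forall>y\<in>B. (x,y) \<in> (rel E B)\<^sup>*)"

definition model5 :: "'a set \<Rightarrow> 'a set set \<Rightarrow> bool" where
  "model5 V E \<longleftrightarrow> (\<exists>B::nat\<Rightarrow>'a set. (\<forall>i<5. B i \<noteq> {} \<and> B i \<subseteq> V \<and> connset E (B i)) \<and>
     (\<forall>i<5. \<forall>j<5. i \<noteq> j \<longrightarrow> B i \<inter> B j = {} \<and> (\<exists>x\<in>B i. \<exists>y\<in>B j. {x,y} \<in> E)))"

definition edges_ok :: "'a set \<Rightarrow> 'a set set \<Rightarrow> bool" where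
  "edges_ok V E \<longleftrightarrow> (\<forall>e\<in>E. \<exists>u v. u \<in> V \<and> v \<in> V \<and> u \<noteq> v \<and> e = {u, v})"

lemma edges_okD: "edges_ok V E \<Longrightarrow> {x,y} \<in> E \<Longrightarrow> x \<in> V \<and> y \<in> V \<and> x \<noteq> y"
  unfolding edges_ok_def by (metis doubleton_eq_iff)

lemma simple_edges_ok: "simple_graph V E \<Longrightarrow> edges_ok V E"
  unfolding simple_graph_def edges_ok_def by blast

lemma rel_mono: "E \<subseteq> E' \<Longrightarrow> B \<subseteq> B' \<Longrightarrow> rel E B \<subseteq> rel E' B'"
  unfolding rel_def by auto

lemma connset_mono: assumes "connset E B" "E \<subseteq> E'" shows "connset E' B"
proof -
  have "rel E B \<subseteq> rel E' B" using rel_mono[of E E' B B] assms by simp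
  then have "(rel E B)\<^sup>* \<subseteq> (rel E' B)\<^sup>*" by (rule rtrancl_mono)
  then show ?thesis using assms unfolding connset_def by blast
qed

lemma step_edges_ok:
  assumes "minor_step G G'" "edges_ok (fst G) (snd G)"
  shows "edges_ok (fst G') (snd G')"
  using assms
proof (induction rule: minor_step.induct)
  case (del_edge e E V) then show ?case unfolding edges_ok_def by auto
next
  case (del_vertex v V E) then show ?case unfolding edges_ok_def by fastforce
next
  case (contract u v E V)
  have eo: "edges_ok V E" using contract by simp
  have uv: "u \<in> V" "v \<in> V" using contract edges_okD[OF eo] by auto
  show ?case unfolding edges_ok_def
  proof
    fix e assume "e \<in> snd (V - {v}, {e \<in> E. v \<notin> e} \<union> {{u, w} |w. {v, w} \<in> E \<and> w \<noteq> u})"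
    then consider "e \<in> E" "v \<notin> e" | w where "e = {u,w}" "{v,w} \<in> E" "w \<noteq> u" by auto
    then show "\<exists>x y. x \<in> fst (V - {v}, {e \<in> E. v \<notin> e} \<union> {{u, w} |w. {v, w} \<in> E \<and> w \<noteq> u}) \<and> y \<in> fst (V - {v}, {e \<in> E. v \<notin> e} \<union> {{u, w} |w. {v, w} \<in> E \<and> w \<noteq> u}) \<and> x \<noteq> y \<and> e = {x, y}"
    proof cases
      case 1 then show ?thesis using eo unfolding edges_ok_def by fastforce
    next
      case 2
      have "w \<in> V" "w \<noteq> v" using edges_okD[OF eo 2(2)] by auto
      then show ?thesis using 2 uv contract(2) by auto
    qed
  qed
qed

lemma model5_mono:
  assumes "model5 V' E'" "V' \<subseteq> V" "E' \<subseteq> E" shows "model5 V E"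
proof -
  obtain B :: "nat \<Rightarrow> _ set" where B: "\<forall>i<5. B i \<noteq> {} \<and> B i \<subseteq> V' \<and> connset E' (B i)"
    "\<forall>i<5. \<forall>j<5. i \<noteq> j \<longrightarrow> B i \<inter> B j = {} \<and> (\<exists>x\<in>B i. \<exists>y\<in>B j. {x,y} \<in> E')"
    using assms(1) unfolding model5_def by blast
  have "\<forall>i<5. B i \<noteq> {} \<and> B i \<subseteq> V \<and> connset E (B i)"
  proof (intro allI impI)
    fix i :: nat assume "i < 5"
    then have "B i \<noteq> {}" "B i \<subseteq> V'" "connset E' (B i)" using B(1) by auto
    then show "B i \<noteq> {} \<and> B i \<subseteq> V \<and> connset E (B i)" using assms(2,3) connset_mono by blast
  qed
  moreover have "\<forall>i<5. \<forall>j<5. i \<noteq> j \<longrightarrow> B i \<inter> B j = {} \<and> (\<exists>x\<in>B i. \<exists>y\<in>B j. {x,y} \<in> E)"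
    using B(2) assms(3) by blast
  ultimately show ?thesis unfolding model5_def by blast
qed

lemma step_model:
  assumes "minor_step G G'" "edges_ok (fst G) (snd G)" "model5 (fst G') (snd G')"
  shows "model5 (fst G) (snd G)"
  using assms
proof (induction rule: minor_step.induct)
  case (del_edge e E V)
  then show ?case using model5_mono[of V "E - {e}" V E] by auto
next
  case (del_vertex v V E)
  then show ?case using model5_mono[of "V - {v}" "{e \<in> E. v \<notin> e}" V E] by auto
next
  case (contract u v E V)
  let ?E' = "{e \<in> E. v \<notin> e} \<union> {{u, w} |w. {v, w} \<in> E \<and> w \<noteq> u}"
  obtain B :: "nat \<Rightarrow> _ set" where B: "\<forall>i<5. B i \<noteq> {} \<and> B i \<subseteq> V - {v} \<and> connset ?E' (B i)"
    "\<forall>i<5. \<forall>j<5. i \<noteq> j \<longrightarrow> B i \<inter> B j = {} \<and> (\<exists>x\<in>B i. \<exists>y\<in>B j. {x,y} \<in> ?E')"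
    using contract unfolding model5_def by auto
  have eo: "edges_ok V E" using contract by simp
  have uv: "u \<in> V" "v \<in> V" using contract edges_okD[OF eo] by auto
  define B' where "B' i = (if u \<in> B i then insert v (B i) else B i)" for i
  have conn: "connset E (B' i)" if "i < 5" for i
  proof -
    have ci: "connset ?E' (B i)" "B i \<subseteq> V - {v}" using B that by auto
    have stp: "(x,y) \<in> (rel E (B' i))\<^sup>*" if "(x,y) \<in> rel ?E' (B i)" for x y
    proof -
      from that have xy: "{x,y} \<in> ?E'" "x \<in> B i" "y \<in> B i" unfolding rel_def by auto
      show ?thesis
      proof (cases "{x,y} \<in> E")
        case True then show ?thesis using xy unfolding rel_def B'_def by auto
      next
        case False
        then obtain w where w: "{x,y} = {u,w}" "{v,w} \<in> E" "w \<noteq> u" using xy(1) by auto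
        have "u \<in> B i" using w xy by (metis doubleton_eq_iff)
        hence vin: "v \<in> B' i" "B i \<subseteq> B' i" unfolding B'_def by auto
        have e1: "{x,v} \<in> E" "{v,y} \<in> E" using w contract(1)
          by (metis doubleton_eq_iff insert_commute)+
        have "(x,v) \<in> rel E (B' i)" "(v,y) \<in> rel E (B' i)"
          using e1 vin xy unfolding rel_def by auto
        then show ?thesis by (meson rtrancl.simps r_into_rtrancl rtrancl_trans)
      qed
    qed
    have sub: "B i \<subseteq> B' i" unfolding B'_def by auto
    have reach: "(x,y) \<in> (rel E (B' i))\<^sup>*" if "(x,y) \<in> (rel ?E' (B i))\<^sup>*" for x y
      using that
    proof (induction rule: rtrancl_induct)
      case base then show ?case by simp
    next
      case (step y z) then show ?case using stp by (meson rtrancl_trans)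
    qed
    show ?thesis unfolding connset_def
    proof (intro ballI)
      fix x y assume "x \<in> B' i" "y \<in> B' i"
      have vu: "(v,u) \<in> (rel E (B' i))\<^sup>* \<and> (u,v) \<in> (rel E (B' i))\<^sup>* \<and> u \<in> B i" if "v \<in> B' i"
      proof -
        have "u \<in> B i" using that ci(2) unfolding B'_def by (auto split: if_splits)
        then have "(v,u) \<in> rel E (B' i)" "(u,v) \<in> rel E (B' i)"
          using contract(1) unfolding rel_def B'_def by (auto simp: insert_commute)
        then show ?thesis using \<open>u \<in> B i\<close> by auto
      qed
      have bb: "z \<in> B' i \<Longrightarrow> z = v \<or> z \<in> B i" for z unfolding B'_def by (auto split: if_splits)
      have rr: "(x,y) \<in> (rel E (B' i))\<^sup>*" if "x \<in> B i" "y \<in> B i" for x y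
        using reach ci(1) that unfolding connset_def by blast
      show "(x,y) \<in> (rel E (B' i))\<^sup>*"
        using bb[OF \<open>x \<in> B' i\<close>] bb[OF \<open>y \<in> B' i\<close>]
      proof (elim disjE)
        assume "x = v" "y = v" then show ?thesis by simp
      next
        assume "x = v" "y \<in> B i" then show ?thesis using vu \<open>x \<in> B' i\<close> rr by (meson rtrancl_trans)
      next
        assume "x \<in> B i" "y = v" then show ?thesis using vu \<open>y \<in> B' i\<close> rr by (meson rtrancl_trans)
      next
        assume "x \<in> B i" "y \<in> B i" then show ?thesis using rr by blast
      qed
    qed
  qed
  have f1: "\<forall>i<5. B' i \<noteq> {} \<and> B' i \<subseteq> V \<and> connset E (B' i)"
  proof (intro allI impI)
    fix i :: nat assume i: "i < 5"
    show "B' i \<noteq> {} \<and> B' i \<subseteq> V \<and> connset E (B' i)"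
      using B(1) i uv conn[OF i] unfolding B'_def by auto
  qed
  have f2: "\<forall>i<5. \<forall>j<5. i \<noteq> j \<longrightarrow> B' i \<inter> B' j = {} \<and> (\<exists>x\<in>B' i. \<exists>y\<in>B' j. {x,y} \<in> E)"
  proof (intro allI impI)
    fix i j :: nat assume ij: "i < 5" "j < 5" "i \<noteq> j"
    have d: "B i \<inter> B j = {}" and ad: "\<exists>x\<in>B i. \<exists>y\<in>B j. {x,y} \<in> ?E'" using B(2) ij by auto
    have vi: "v \<notin> B i" "v \<notin> B j" using B(1) ij by auto
    have "B' i \<inter> B' j = {}" using d vi unfolding B'_def by auto
    moreover
    from ad obtain x y where xy: "x \<in> B i" "y \<in> B j" "{x,y} \<in> ?E'" by auto
    have "\<exists>x\<in>B' i. \<exists>y\<in>B' j. {x, y} \<in> E"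
    proof (cases "{x,y} \<in> E")
      case True then show ?thesis using xy unfolding B'_def by auto
    next
      case False
      then obtain w where w: "{x,y} = {u,w}" "{v,w} \<in> E" using xy(3) by auto
      then consider "x = u" "y = w" | "x = w" "y = u" by (metis doubleton_eq_iff)
      then show ?thesis
      proof cases
        case 1 then show ?thesis using xy w unfolding B'_def by auto
      next
        case 2 then show ?thesis using xy w unfolding B'_def by (auto simp: insert_commute)
      qed
    qed
    ultimately show "B' i \<inter> B' j = {} \<and> (\<exists>x\<in>B' i. \<exists>y\<in>B' j. {x,y} \<in> E)" by blast
  qed
  show ?case unfolding model5_def using f1 f2 by auto
qed

lemma steps_model:
  assumes "minor_step\<^sup>*\<^sup>* G H" "edges_ok (fst G) (snd G)" "model5 (fst H) (snd H)"
  shows "model5 (fst G) (snd G)"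
  using assms
proof (induction rule: converse_rtranclp_induct)
  case base then show ?case by simp
next
  case (step y z) then show ?case using step_edges_ok step_model by blast
qed

lemma complete5_model:
  assumes "finite V" "card V = 5" "complete_graph V E"
  shows "model5 V E"
proof -
  obtain xs where xs: "set xs = V" "distinct xs" using finite_distinct_list[OF assms(1)] by auto
  have len: "length xs = 5" using xs assms(2) distinct_card by fastforce
  have a: "\<forall>i<5. {xs ! i} \<noteq> {} \<and> {xs ! i} \<subseteq> V \<and> connset E {xs ! i}"
  proof (intro allI impI)
    fix i :: nat assume "i < 5"
    then have "xs ! i \<in> V" using xs(1) len by (metis nth_mem)
    moreover have "connset E {xs ! i}" unfolding connset_def by simp
    ultimately show "{xs ! i} \<noteq> {} \<and> {xs ! i} \<subseteq> V \<and> connset E {xs ! i}" by simp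
  qed
  have b: "\<forall>i<5. \<forall>j<5. i \<noteq> j \<longrightarrow> {xs ! i} \<inter> {xs ! j} = {} \<and> (\<exists>x\<in>{xs ! i}. \<exists>y\<in>{xs ! j}. {x, y} \<in> E)"
  proof (intro allI impI)
    fix i j :: nat assume ij: "i < 5" "j < 5" "i \<noteq> j"
    then have ne: "xs ! i \<noteq> xs ! j" using xs(2) len by (simp add: nth_eq_iff_index_eq)
    have iV: "xs ! i \<in> V" "xs ! j \<in> V" using xs(1) len ij by (metis nth_mem)+
    have "{xs ! i, xs ! j} \<in> E" using assms(3) ne iV unfolding complete_graph_def by blast
    then show "{xs ! i} \<inter> {xs ! j} = {} \<and> (\<exists>x\<in>{xs ! i}. \<exists>y\<in>{xs ! j}. {x, y} \<in> E)"
      using ne by blast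
  qed
  show ?thesis unfolding model5_def apply (rule exI[of _ "\<lambda>i. {xs ! i}"]) using a b by blast
qed

lemma minor_model:
  assumes "simple_graph V E" "has_K_minor 5 V E" shows "model5 V E"
proof -
  obtain V' E' where "is_minor (V', E') (V, E)" "finite V'" "card V' = 5" "complete_graph V' E'"
    using assms(2) unfolding has_K_minor_def by auto
  then show ?thesis using steps_model[of "(V,E)" "(V',E')"] complete5_model simple_edges_ok[OF assms(1)]
    unfolding is_minor_def by auto
qed


lemma mod_lcancel: "(a + x) mod n = (a + y) mod n \<Longrightarrow> x mod n = (y::nat) mod n"
  using cong_add_lcancel_nat unfolding cong_def by blast

definition rc :: "'a list \<Rightarrow> nat \<Rightarrow> nat \<Rightarrow> 'a" where
  "rc cs ia k = cs ! ((ia + k) mod length cs)"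

definition chordless :: "'a set set \<Rightarrow> 'a list \<Rightarrow> bool" where
  "chordless E cs \<longleftrightarrow> (\<forall>x\<in>set cs. \<forall>y\<in>set cs. {x, y} \<in> E \<longrightarrow> {x, y} \<in> cycle_edges cs)"

lemma chordalD: "chordal V E \<Longrightarrow> is_cycle V E cs \<Longrightarrow> length cs \<ge> 4 \<Longrightarrow> chordless E cs \<Longrightarrow> False"
  unfolding chordal_def chordless_def by blast

lemma mod_len: "3 \<le> length cs \<Longrightarrow> x mod length cs < length cs"
proof -
  assume "3 \<le> length cs"
  then have "0 < length cs" by linarith
  then show ?thesis by (rule mod_less_divisor)
qed

lemma rc_edge:
  assumes "is_cycle V E cs" shows "{rc cs ia k, rc cs ia (Suc k)} \<in> E"
proof -
  let ?n = "length cs"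
  have n: "?n \<ge> 3" using assms unfolding is_cycle_def by auto
  let ?i = "(ia + k) mod ?n"
  have n0: "0 < ?n" using n by linarith
  have "?i < ?n" using n0 by simp
  then have "{cs ! ?i, cs ! ((?i + 1) mod ?n)} \<in> E" using assms unfolding is_cycle_def by blast
  moreover have "(?i + 1) mod ?n = (ia + Suc k) mod ?n" by (simp add: mod_Suc_eq)
  ultimately show ?thesis unfolding rc_def by simp
qed

lemma rc_in: "is_cycle V E cs \<Longrightarrow> rc cs ia k \<in> set cs"
  unfolding rc_def is_cycle_def using mod_len nth_mem by blast

lemma cyc_V: "is_cycle V E cs \<Longrightarrow> set cs \<subseteq> V"
  unfolding is_cycle_def by blast

lemma rc_V: "is_cycle V E cs \<Longrightarrow> rc cs ia k \<in> V"
  using rc_in cyc_V by fast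

lemma rc_inj:
  assumes "is_cycle V E cs" "k < length cs" "k' < length cs" "rc cs ia k = rc cs ia k'"
  shows "k = k'"
proof -
  let ?n = "length cs"
  have n: "?n \<ge> 3" "distinct cs" using assms unfolding is_cycle_def by auto
  have "(ia + k) mod ?n = (ia + k') mod ?n"
    using assms(4) nth_eq_iff_index_eq[OF n(2) mod_len[OF n(1)] mod_len[OF n(1)]] unfolding rc_def by blast
  then have "k mod ?n = k' mod ?n" by (rule mod_lcancel)
  then show ?thesis using assms(2,3) by simp
qed

lemma rc_period: "rc cs ia (length cs) = rc cs ia 0"
  unfolding rc_def by simp

lemma rc_index:
  assumes "ia < length cs" "j < length cs"
  shows "rc cs ia ((j + length cs - ia) mod length cs) = cs ! j"
proof -
  let ?n = "length cs"
  have "(ia + (j + ?n - ia) mod ?n) mod ?n = (ia + (j + ?n - ia)) mod ?n" by (simp add: mod_add_right_eq)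
  also have "ia + (j + ?n - ia) = j + ?n" using assms by simp
  also have "(j + ?n) mod ?n = j" using assms by simp
  finally show ?thesis unfolding rc_def by simp
qed

lemma rc_chord:
  assumes "is_cycle V E cs" "chordless E cs" "k < length cs" "k' < length cs"
    "{rc cs ia k, rc cs ia k'} \<in> E"
  shows "k' = Suc k mod length cs \<or> k = Suc k' mod length cs"
proof -
  let ?n = "length cs"
  have n: "?n \<ge> 3" "distinct cs" using assms unfolding is_cycle_def by auto
  have "{rc cs ia k, rc cs ia k'} \<in> cycle_edges cs"
    using assms rc_in unfolding chordless_def by blast
  then obtain j where j: "j < ?n" "{rc cs ia k, rc cs ia k'} = {cs ! j, cs ! ((j + 1) mod ?n)}"
    unfolding cycle_edges_def by blast
  let ?i = "(ia + k) mod ?n" and ?i' = "(ia + k') mod ?n"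
  have n0: "0 < ?n" using n by linarith
  have ii: "?i < ?n" "?i' < ?n" "(j+1) mod ?n < ?n" using n0 by simp_all
  have "(cs ! ?i = cs ! j \<and> cs ! ?i' = cs ! ((j + 1) mod ?n)) \<or> (cs ! ?i = cs ! ((j + 1) mod ?n) \<and> cs ! ?i' = cs ! j)"
    using j(2) unfolding rc_def by (metis doubleton_eq_iff)
  then have "(?i = j \<and> ?i' = (j + 1) mod ?n) \<or> (?i = (j + 1) mod ?n \<and> ?i' = j)"
    using ii j(1) n(2) by (simp add: nth_eq_iff_index_eq)
  then have "?i' = (ia + Suc k) mod ?n \<or> ?i = (ia + Suc k') mod ?n"
    by (metis add_Suc_right mod_Suc_eq Suc_eq_plus1)
  then have "k' mod ?n = Suc k mod ?n \<or> k mod ?n = Suc k' mod ?n"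
    using mod_lcancel by blast
  then show ?thesis using assms(3,4) by simp
qed


lemma k34_simple: "k34_sum V E \<Longrightarrow> simple_graph V E"
proof (induction rule: k34_sum.induct)
  case (base V E)
  have "\<forall>e\<in>E. \<exists>u v. u \<in> V \<and> v \<in> V \<and> u \<noteq> v \<and> e = {u, v}"
  proof
    fix e assume "e \<in> E"
    then have "e \<in> {{u, v} |u v. u \<in> V \<and> v \<in> V \<and> u \<noteq> v}" using base(3) unfolding complete_graph_def by simp
    then show "\<exists>u v. u \<in> V \<and> v \<in> V \<and> u \<noteq> v \<and> e = {u, v}" by blast
  qed
  then show ?case unfolding simple_graph_def using base(1) by blast
next
  case (csum V1 E1 V2 E2)
  have "finite (V1 \<union> V2)" using csum.IH unfolding simple_graph_def by blast
  moreover have "\<forall>e\<in>E1 \<union> E2. \<exists>u v. u \<in> V1 \<union> V2 \<and> v \<in> V1 \<union> V2 \<and> u \<noteq> v \<and> e = {u, v}"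
  proof
    fix e assume "e \<in> E1 \<union> E2"
    then show "\<exists>u v. u \<in> V1 \<union> V2 \<and> v \<in> V1 \<union> V2 \<and> u \<noteq> v \<and> e = {u, v}"
    proof
      assume "e \<in> E1" then obtain u v where "u \<in> V1" "v \<in> V1" "u \<noteq> v" "e = {u,v}"
        using csum.IH(1) unfolding simple_graph_def by blast
      then show ?thesis by blast
    next
      assume "e \<in> E2" then obtain u v where "u \<in> V2" "v \<in> V2" "u \<noteq> v" "e = {u,v}"
        using csum.IH(2) unfolding simple_graph_def by blast
      then show ?thesis by blast
    qed
  qed
  ultimately show ?case unfolding simple_graph_def by blast
qed

lemma k34_tri: "k34_sum V E \<Longrightarrow> {x,y} \<in> E \<Longrightarrow> \<exists>z. {x,z} \<in> E \<and> {y,z} \<in> E \<and> z \<noteq> x \<and> z \<noteq> y"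
proof (induction arbitrary: x y rule: k34_sum.induct)
  case (base V E)
  have eo: "edges_ok V E" using k34_simple[OF k34_sum.base[OF base(1-3)]] simple_edges_ok by blast
  have xy: "x \<in> V" "y \<in> V" "x \<noteq> y" using edges_okD[OF eo base(4)] by auto
  have "card V \<ge> 3" using base(2) by auto
  have "card {x,y} = 2" using xy by simp
  then have "\<not> V \<subseteq> {x,y}" using \<open>card V \<ge> 3\<close> base(1) by (metis card_mono finite.emptyI finite.insertI not_less_eq_eq numeral_3_eq_3 numeral_2_eq_2)
  then obtain z where z: "z \<in> V" "z \<noteq> x" "z \<noteq> y" by auto
  have "{x,z} \<in> E" "{y,z} \<in> E" using z xy base(3) unfolding complete_graph_def by blast+
  then show ?case using z by blast
next
  case (csum V1 E1 V2 E2)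
  then show ?case by blast
qed

lemma tri_cycle:
  assumes "simple_graph V E" "{x,y} \<in> E" "{x,z} \<in> E" "{y,z} \<in> E" "z \<noteq> x" "z \<noteq> y"
  shows "\<exists>cs. is_cycle V E cs \<and> {x,y} \<in> cycle_edges cs"
proof -
  have eo: "edges_ok V E" using assms(1) by (rule simple_edges_ok)
  have v: "x \<in> V" "y \<in> V" "z \<in> V" "x \<noteq> y" using edges_okD[OF eo assms(2)] edges_okD[OF eo assms(3)] by auto
  have c: "is_cycle V E [x,y,z]" unfolding is_cycle_def
  proof (intro conjI allI impI)
    show "distinct [x,y,z]" using v assms(5,6) by auto
    show "set [x, y, z] \<subseteq> V" using v by auto
    fix i assume "i < length [x,y,z]"
    then have "i = 0 \<or> i = 1 \<or> i = 2" by auto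
    then show "{[x, y, z] ! i, [x, y, z] ! ((i + 1) mod length [x, y, z])} \<in> E"
      using assms(2-4) by (auto simp: insert_commute)
  qed simp
  have "{x,y} \<in> cycle_edges [x,y,z]" unfolding cycle_edges_def
    by (rule CollectI, rule exI[of _ 0]) simp
  then show ?thesis using c by blast
qed

lemma k34_bridgeless: "k34_sum V E \<Longrightarrow> bridgeless V E"
proof -
  assume k: "k34_sum V E"
  have s: "simple_graph V E" using k34_simple[OF k] .
  show ?thesis unfolding bridgeless_def is_bridge_def
  proof (intro ballI notI)
    fix e assume e: "e \<in> E" and nb: "e \<in> E \<and> \<not> (\<exists>cs. is_cycle V E cs \<and> e \<in> cycle_edges cs)"
    obtain x y where xy: "e = {x,y}" using e s unfolding simple_graph_def by blast
    obtain z where "{x,z} \<in> E" "{y,z} \<in> E" "z \<noteq> x" "z \<noteq> y" using k34_tri[OF k] e xy by blast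
    then show False using tri_cycle[OF s] e xy nb by blast
  qed
qed


lemma proj_conn:
  assumes eo1: "edges_ok V1 E1" and eo2: "edges_ok V2 E2" and cl: "is_clique V1 E1 (V1 \<inter> V2)"
    and x: "x \<in> B" "x \<in> V1" and p: "(x,z) \<in> (rel (E1 \<union> E2) B)\<^sup>*"
  shows "(z \<in> V1 \<and> (x,z) \<in> (rel E1 (B \<inter> V1))\<^sup>*) \<or>
         (z \<notin> V1 \<and> (\<exists>s\<in>B \<inter> V1 \<inter> V2. (x,s) \<in> (rel E1 (B \<inter> V1))\<^sup>*))"
  using p
proof (induction rule: rtrancl_induct)
  case base then show ?case using x by simp
next
  case (step z z')
  have e: "{z,z'} \<in> E1 \<union> E2" "z \<in> B" "z' \<in> B" using step(2) unfolding rel_def by auto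
  let ?R = "rel E1 (B \<inter> V1)"
  have clq: "(s,t) \<in> ?R\<^sup>*" if "s \<in> B \<inter> V1 \<inter> V2" "t \<in> B \<inter> V1 \<inter> V2" for s t
  proof (cases "s = t")
    case True then show ?thesis by simp
  next
    case False
    then have "{s,t} \<in> E1" using cl that unfolding is_clique_def by blast
    then have "(s,t) \<in> ?R" using that unfolding rel_def by blast
    then show ?thesis by blast
  qed
  from step(3) show ?case
  proof
    assume A: "z \<in> V1 \<and> (x, z) \<in> ?R\<^sup>*"
    show ?thesis
    proof (cases "z' \<in> V1")
      case True
      have "(z,z') \<in> ?R\<^sup>*"
      proof (cases "{z,z'} \<in> E1")
        case True then have "(z,z') \<in> ?R" using A e \<open>z' \<in> V1\<close> unfolding rel_def by blast
        then show ?thesis by blast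
      next
        case False
        then have "{z,z'} \<in> E2" using e by blast
        then have "z \<in> V2" "z' \<in> V2" using edges_okD[OF eo2] by blast+
        then show ?thesis using clq A \<open>z' \<in> V1\<close> e by blast
      qed
      then show ?thesis using A True by (meson rtrancl_trans)
    next
      case False
      then have "{z,z'} \<notin> E1" using edges_okD[OF eo1] by blast
      then have "{z,z'} \<in> E2" using e by blast
      then have "z \<in> V2" using edges_okD[OF eo2] by blast
      then show ?thesis using A False e by blast
    qed
  next
    assume Bc: "z \<notin> V1 \<and> (\<exists>s\<in>B \<inter> V1 \<inter> V2. (x, s) \<in> ?R\<^sup>*)"
    then obtain s where s: "s \<in> B \<inter> V1 \<inter> V2" "(x, s) \<in> ?R\<^sup>*" by blast
    show ?thesis
    proof (cases "z' \<in> V1")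
      case True
      have "{z,z'} \<notin> E1" using Bc edges_okD[OF eo1] by blast
      then have "{z,z'} \<in> E2" using e by blast
      then have "z' \<in> V2" using edges_okD[OF eo2] by blast
      then have "(s,z') \<in> ?R\<^sup>*" using clq s True e by blast
      then show ?thesis using s True by (meson rtrancl_trans)
    next
      case False then show ?thesis using s by blast
    qed
  qed
qed

lemma proj_model:
  fixes B :: "nat \<Rightarrow> 'a set"
  assumes eo1: "edges_ok V1 E1" and eo2: "edges_ok V2 E2" and cl: "is_clique V1 E1 (V1 \<inter> V2)"
    and B1: "\<forall>i<5. B i \<noteq> {} \<and> B i \<subseteq> V1 \<union> V2 \<and> connset (E1 \<union> E2) (B i)"
    and B2: "\<forall>i<5. \<forall>j<5. i \<noteq> j \<longrightarrow> B i \<inter> B j = {} \<and> (\<exists>x\<in>B i. \<exists>y\<in>B j. {x,y} \<in> E1 \<union> E2)"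
    and meet: "\<forall>i<5. B i \<inter> V1 \<noteq> {}"
  shows "model5 V1 E1"
proof -
  define C where "C i = B i \<inter> V1" for i :: nat
  have conn: "connset E1 (C i)" if "i < 5" for i
    unfolding connset_def
  proof (intro ballI)
    fix x y assume "x \<in> C i" "y \<in> C i"
    then have "(x,y) \<in> (rel (E1 \<union> E2) (B i))\<^sup>*" using B1 that unfolding connset_def C_def by blast
    then show "(x,y) \<in> (rel E1 (C i))\<^sup>*"
      using proj_conn[OF eo1 eo2 cl, of x "B i" y] \<open>x \<in> C i\<close> \<open>y \<in> C i\<close> unfolding C_def by blast
  qed
  have wit: "\<exists>s\<in>B i \<inter> V1 \<inter> V2. True" if w: "i < 5" "z \<in> B i" "z \<notin> V1" for i z
  proof -
    obtain x where x: "x \<in> B i" "x \<in> V1" using meet w(1) by blast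
    have "(x,z) \<in> (rel (E1 \<union> E2) (B i))\<^sup>*" using B1 w x unfolding connset_def by blast
    then show ?thesis using proj_conn[OF eo1 eo2 cl x] w by blast
  qed
  have f1: "\<forall>i<5. C i \<noteq> {} \<and> C i \<subseteq> V1 \<and> connset E1 (C i)"
    using meet conn unfolding C_def by blast
  have f2: "\<forall>i<5. \<forall>j<5. i \<noteq> j \<longrightarrow> C i \<inter> C j = {} \<and> (\<exists>x\<in>C i. \<exists>y\<in>C j. {x,y} \<in> E1)"
  proof (intro allI impI)
    fix i j :: nat assume ij: "i < 5" "j < 5" "i \<noteq> j"
    have d: "B i \<inter> B j = {}" using B2 ij by blast
    obtain x y where xy: "x \<in> B i" "y \<in> B j" "{x,y} \<in> E1 \<union> E2" using B2 ij by blast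
    have ne: "s \<noteq> t" if "s \<in> B i" "t \<in> B j" for s t using d that by blast
    have clE: "{s,t} \<in> E1" if "s \<in> B i \<inter> V1 \<inter> V2" "t \<in> B j \<inter> V1 \<inter> V2" for s t
      using cl that ne unfolding is_clique_def by blast
    have "\<exists>x\<in>C i. \<exists>y\<in>C j. {x,y} \<in> E1"
    proof (cases "x \<in> V1 \<and> y \<in> V1")
      case True
      show ?thesis
      proof (cases "{x,y} \<in> E1")
        case True then show ?thesis using xy \<open>x \<in> V1 \<and> y \<in> V1\<close> unfolding C_def by blast
      next
        case False
        then have "{x,y} \<in> E2" using xy by blast
        then have "x \<in> V2" "y \<in> V2" using edges_okD[OF eo2] by blast+
        then show ?thesis using clE xy True unfolding C_def by blast
      qed
    next
      case False
      then have "{x,y} \<notin> E1" using edges_okD[OF eo1] by blast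
      then have "{x,y} \<in> E2" using xy by blast
      then have v2: "x \<in> V2" "y \<in> V2" using edges_okD[OF eo2] by blast+
      obtain s where s: "s \<in> B i \<inter> V1 \<inter> V2"
        using wit[OF ij(1) xy(1)] v2 xy(1) by (cases "x \<in> V1") blast+
      obtain t where t: "t \<in> B j \<inter> V1 \<inter> V2"
        using wit[OF ij(2) xy(2)] v2 xy(2) by (cases "y \<in> V1") blast+
      show ?thesis using clE[OF s t] s t unfolding C_def by blast
    qed
    then show "C i \<inter> C j = {} \<and> (\<exists>x\<in>C i. \<exists>y\<in>C j. {x,y} \<in> E1)" using d unfolding C_def by blast
  qed
  show ?thesis unfolding model5_def apply (rule exI[of _ C]) using f1 f2 by blast
qed

lemma k34_nomodel: "k34_sum V E \<Longrightarrow> \<not> model5 V E"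
proof (induction rule: k34_sum.induct)
  case (base V E)
  show ?case
  proof
    assume "model5 V E"
    then obtain B :: "nat \<Rightarrow> _ set" where B: "\<forall>i<5. B i \<noteq> {} \<and> B i \<subseteq> V \<and> connset E (B i)"
      "\<forall>i<5. \<forall>j<5. i \<noteq> j \<longrightarrow> B i \<inter> B j = {} \<and> (\<exists>x\<in>B i. \<exists>y\<in>B j. {x,y} \<in> E)"
      unfolding model5_def by blast
    define f where "f i = (SOME x. x \<in> B i)" for i
    have fB: "f i \<in> B i" if "i < 5" for i
      unfolding f_def using B(1) that by (metis some_in_eq)
    have inj: "inj_on f {..<5}"
    proof (rule inj_onI)
      fix i j assume ij: "i \<in> {..<(5::nat)}" "j \<in> {..<5}" "f i = f j"
      show "i = j"
      proof (rule ccontr)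
        assume "i \<noteq> j"
        then have "B i \<inter> B j = {}" using B(2) ij by auto
        moreover have "f i \<in> B i" "f j \<in> B j" using fB ij(1,2) by auto
        moreover have "f j \<in> B i" using \<open>f i \<in> B i\<close> ij(3) by simp
        ultimately show False by blast
      qed
    qed
    have sub: "f ` {..<5} \<subseteq> V" using fB B(1) by auto
    have "card (f ` {..<5}) = 5" using card_image[OF inj] by simp
    then have "5 \<le> card V" using card_mono[OF base(1) sub] by simp
    then show False using base(2) by auto
  qed
next
  case (csum V1 E1 V2 E2)
  have eo1: "edges_ok V1 E1" using k34_simple[OF csum(1)] simple_edges_ok by blast
  have eo2: "edges_ok V2 E2" using k34_simple[OF csum(2)] simple_edges_ok by blast
  show ?case
  proof
    assume "model5 (V1 \<union> V2) (E1 \<union> E2)"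
    then obtain B :: "nat \<Rightarrow> _ set" where B: "\<forall>i<5. B i \<noteq> {} \<and> B i \<subseteq> V1 \<union> V2 \<and> connset (E1 \<union> E2) (B i)"
      "\<forall>i<5. \<forall>j<5. i \<noteq> j \<longrightarrow> B i \<inter> B j = {} \<and> (\<exists>x\<in>B i. \<exists>y\<in>B j. {x,y} \<in> E1 \<union> E2)"
      unfolding model5_def by blast
    show False
    proof (cases "\<forall>i<5. B i \<inter> V1 \<noteq> {}")
      case True
      then have "model5 V1 E1" using proj_model[OF eo1 eo2 csum(3) B True] by blast
      then show False using csum.IH by blast
    next
      case F1: False
      show False
      proof (cases "\<forall>i<5. B i \<inter> V2 \<noteq> {}")
        case True
        have cl: "is_clique V2 E2 (V2 \<inter> V1)" using csum(4) by (simp add: Int_commute)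
        have B1: "\<forall>i<5. B i \<noteq> {} \<and> B i \<subseteq> V2 \<union> V1 \<and> connset (E2 \<union> E1) (B i)"
          using B(1) by (simp add: Un_commute)
        have B2: "\<forall>i<5. \<forall>j<5. i \<noteq> j \<longrightarrow> B i \<inter> B j = {} \<and> (\<exists>x\<in>B i. \<exists>y\<in>B j. {x,y} \<in> E2 \<union> E1)"
          using B(2) by (simp add: Un_commute)
        have "model5 V2 E2" using proj_model[OF eo2 eo1 cl B1 B2 True] by blast
        then show False using csum.IH by blast
      next
        case False
        then obtain j where j: "j < 5" "B j \<inter> V2 = {}" by blast
        obtain i where i: "i < 5" "B i \<inter> V1 = {}" using F1 by blast
        have "i \<noteq> j" using B(1) i j by blast
        then obtain x y where xy: "x \<in> B i" "y \<in> B j" "{x,y} \<in> E1 \<union> E2" using B(2) i j by blast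
        then show False using edges_okD[OF eo1, of x y] edges_okD[OF eo2, of x y] i j by blast
      qed
    qed
  qed
qed


lemma next_ne:
  assumes "3 \<le> n" "i < n" shows "i \<noteq> Suc i mod n"
proof (cases "Suc i < n")
  case True then show ?thesis by simp
next
  case False then have "Suc i = n" using assms by simp
  then show ?thesis using assms by simp
qed

lemma sub_cycle:
  assumes c: "is_cycle (V1 \<union> V2) (E1 \<union> E2) cs" and ch: "chordless (E1 \<union> E2) cs"
    and s: "set cs \<subseteq> V1" and eo2: "edges_ok V2 E2" and cl: "is_clique V1 E1 (V1 \<inter> V2)"
  shows "is_cycle V1 E1 cs \<and> chordless E1 cs"
proof -
  let ?n = "length cs"
  have n: "3 \<le> ?n" "distinct cs" using c unfolding is_cycle_def by auto
  have e: "{cs ! i, cs ! ((i + 1) mod ?n)} \<in> E1" if i: "i < ?n" for i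
  proof -
    have m: "(i+1) mod ?n < ?n" using mod_len[OF n(1)] .
    have ee: "{cs ! i, cs ! ((i + 1) mod ?n)} \<in> E1 \<union> E2" using c i unfolding is_cycle_def by blast
    have inV1: "cs ! i \<in> V1" "cs ! ((i + 1) mod ?n) \<in> V1" using s i m nth_mem by blast+
    have ne: "cs ! i \<noteq> cs ! ((i + 1) mod ?n)"
      using nth_eq_iff_index_eq[OF n(2) i m] next_ne[OF n(1) i] by simp
    show ?thesis
    proof (cases "{cs ! i, cs ! ((i + 1) mod ?n)} \<in> E2")
      case True
      then have "cs ! i \<in> V2" "cs ! ((i + 1) mod ?n) \<in> V2" using edges_okD[OF eo2] by blast+
      then show ?thesis using cl inV1 ne unfolding is_clique_def by blast
    next
      case False then show ?thesis using ee by blast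
    qed
  qed
  have "is_cycle V1 E1 cs" unfolding is_cycle_def using n s e by blast
  moreover have "chordless E1 cs" using ch unfolding chordless_def by blast
  ultimately show ?thesis by blast
qed

lemma cross:
  assumes c: "is_cycle (V1 \<union> V2) (E1 \<union> E2) cs" and ch: "chordless (E1 \<union> E2) cs"
    and eo1: "edges_ok V1 E1" and eo2: "edges_ok V2 E2" and cl: "is_clique V1 E1 (V1 \<inter> V2)"
    and a: "a \<in> set cs" "a \<notin> V1" and b: "b \<in> set cs" "b \<notin> V2"
  shows False
proof -
  let ?n = "length cs"
  have n: "3 \<le> ?n" "distinct cs" using c unfolding is_cycle_def by auto
  obtain ia where ia: "ia < ?n" "cs ! ia = a" using a(1) by (metis in_set_conv_nth)
  obtain jb where jb: "jb < ?n" "cs ! jb = b" using b(1) by (metis in_set_conv_nth)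
  define c where "c = rc cs ia"
  define kb where "kb = (jb + ?n - ia) mod ?n"
  have ckb: "c kb = b" unfolding c_def kb_def using rc_index[OF ia(1) jb(1)] jb(2) by simp
  have kbn: "kb < ?n" unfolding kb_def using mod_len[OF n(1)] .
  have c0: "c 0 = a" unfolding c_def rc_def using ia by simp
  have cn: "c ?n = a" using c0 rc_period unfolding c_def by metis
  have cV: "c k \<in> V1 \<union> V2" for k unfolding c_def using rc_V[OF c] .
  have cE: "{c k, c (Suc k)} \<in> E1 \<union> E2" for k unfolding c_def using rc_edge[OF c] .
  have bV1: "b \<in> V1" using cV ckb b(2) by blast
  define k1 where "k1 = (LEAST k. c k \<in> V1)"
  have k1a: "c k1 \<in> V1" unfolding k1_def using bV1 ckb by (metis LeastI)
  have k1b: "k1 \<le> kb" unfolding k1_def using bV1 ckb by (metis Least_le)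
  have k1pos: "0 < k1" using k1a c0 a(2) by (metis gr0I)
  have k1prev: "c (k1 - 1) \<notin> V1"
  proof
    assume "c (k1 - 1) \<in> V1"
    then have "k1 \<le> k1 - 1" unfolding k1_def by (metis Least_le k1_def)
    then show False using k1pos by simp
  qed
  have "{c (k1 - 1), c (Suc (k1 - 1))} \<in> E1 \<union> E2" by (rule cE)
  then have "{c (k1 - 1), c k1} \<in> E1 \<union> E2" using k1pos by simp
  moreover have "{c (k1 - 1), c k1} \<notin> E1" using k1prev edges_okD[OF eo1] by blast
  ultimately have "{c (k1 - 1), c k1} \<in> E2" by blast
  then have k1S: "c k1 \<in> V1 \<inter> V2" using k1a edges_okD[OF eo2] by blast
  define k3 where "k3 = (LEAST k. kb < k \<and> c k \<notin> V1)"
  have ex3: "kb < ?n \<and> c ?n \<notin> V1" using kbn cn a(2) by simp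
  have k3a: "kb < k3 \<and> c k3 \<notin> V1" unfolding k3_def using ex3 by (rule LeastI)
  have k3b: "k3 \<le> ?n" unfolding k3_def using ex3 by (rule Least_le)
  have k3gt: "kb < k3" using k3a by blast
  have k3prev: "c (k3 - 1) \<in> V1"
  proof (cases "k3 - 1 = kb")
    case True then show ?thesis using bV1 ckb by simp
  next
    case False
    then have lt: "kb < k3 - 1" using k3a by linarith
    show ?thesis
    proof (rule ccontr)
      assume "c (k3 - 1) \<notin> V1"
      then have "k3 \<le> k3 - 1" unfolding k3_def using lt by (metis Least_le k3_def)
      then show False using k3a by (cases k3) auto
    qed
  qed
  have "{c (k3 - 1), c (Suc (k3 - 1))} \<in> E1 \<union> E2" by (rule cE)
  then have "{c (k3 - 1), c k3} \<in> E1 \<union> E2" using k3gt by (cases k3) auto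
  moreover have "{c (k3 - 1), c k3} \<notin> E1" using k3a edges_okD[OF eo1] by blast
  ultimately have "{c (k3 - 1), c k3} \<in> E2" by blast
  then have k2S: "c (k3 - 1) \<in> V1 \<inter> V2" using k3prev edges_okD[OF eo2] by blast
  define k2 where "k2 = k3 - 1"
  have k2n: "k2 < ?n" using k3b k3gt unfolding k2_def by linarith
  have k1n: "k1 < ?n" using k1b kbn by linarith
  have "k1 \<noteq> kb" using k1S ckb b(2) by blast
  then have k1lt: "k1 < kb" using k1b by linarith
  have "k2 \<noteq> kb" using k2S ckb b(2) unfolding k2_def by blast
  then have k2gt: "kb < k2" using k3gt unfolding k2_def by linarith
  have ne: "c k1 \<noteq> c k2"
  proof
    assume "c k1 = c k2"
    then have "k1 = k2" using rc_inj[OF c k1n k2n] unfolding c_def by blast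
    then show False using k1lt k2gt by simp
  qed
  have "{c k1, c k2} \<in> E1" using cl k1S k2S ne unfolding is_clique_def k2_def by blast
  then have "{rc cs ia k1, rc cs ia k2} \<in> E1 \<union> E2" unfolding c_def by blast
  then have "k2 = Suc k1 mod ?n \<or> k1 = Suc k2 mod ?n" using rc_chord[OF c ch k1n k2n] by blast
  moreover have "Suc k1 mod ?n = Suc k1" using k1lt kbn by simp
  moreover have "Suc k2 mod ?n = (if Suc k2 = ?n then 0 else Suc k2)" using k2n by simp
  ultimately show False using k1lt k2gt k1pos by (auto split: if_splits)
qed

lemma k34_chordal: "k34_sum V E \<Longrightarrow> chordal V E"
proof (induction rule: k34_sum.induct)
  case (base V E)
  show ?case
  proof (rule ccontr)
    assume "\<not> chordal V E"
    then obtain cs where c: "is_cycle V E cs" "length cs \<ge> 4" "chordless E cs"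
      unfolding chordal_def chordless_def by blast
    let ?c = "rc cs 0"
    have l: "0 < length cs" "2 < length cs" using c(2) by linarith+
    have ne: "?c 0 \<noteq> ?c 2"
    proof
      assume "?c 0 = ?c 2"
      then have "(0::nat) = 2" using rc_inj[OF c(1) l(1) l(2)] by blast
      then show False by simp
    qed
    have "{?c 0, ?c 2} \<in> E" using base(3) ne rc_V[OF c(1)] unfolding complete_graph_def by blast
    then have "2 = Suc 0 mod length cs \<or> 0 = Suc 2 mod length cs"
      using rc_chord[OF c(1) c(3) l(1) l(2)] by blast
    moreover have "Suc 0 mod length cs = 1" "Suc 2 mod length cs = 3" using c(2) by simp_all
    ultimately show False by simp
  qed
next
  case (csum V1 E1 V2 E2)
  have eo1: "edges_ok V1 E1" using k34_simple[OF csum(1)] simple_edges_ok by blast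
  have eo2: "edges_ok V2 E2" using k34_simple[OF csum(2)] simple_edges_ok by blast
  show ?case
  proof (rule ccontr)
    assume "\<not> chordal (V1 \<union> V2) (E1 \<union> E2)"
    then obtain cs where c: "is_cycle (V1 \<union> V2) (E1 \<union> E2) cs" "length cs \<ge> 4" "chordless (E1 \<union> E2) cs"
      unfolding chordal_def chordless_def by blast
    show False
    proof (cases "set cs \<subseteq> V1")
      case True
      then have "is_cycle V1 E1 cs \<and> chordless E1 cs" using sub_cycle[OF c(1) c(3) True eo2 csum(3)] by blast
      then show False using csum.IH(1) c(2) chordalD by blast
    next
      case F1: False
      show False
      proof (cases "set cs \<subseteq> V2")
        case True
        have c1: "is_cycle (V2 \<union> V1) (E2 \<union> E1) cs" "chordless (E2 \<union> E1) cs" using c by (simp_all add: Un_commute)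
        have cl: "is_clique V2 E2 (V2 \<inter> V1)" using csum(4) by (simp add: Int_commute)
        have "is_cycle V2 E2 cs \<and> chordless E2 cs" using sub_cycle[OF c1 True eo1 cl] by blast
        then show False using csum.IH(2) c(2) chordalD by blast
      next
        case False
        then obtain b where b: "b \<in> set cs" "b \<notin> V2" by blast
        obtain a where a: "a \<in> set cs" "a \<notin> V1" using F1 by blast
        show False using cross[OF c(1) c(3) eo1 eo2 csum(3) a b] .
      qed
    qed
  qed
qed


definition walk :: "('a \<times> 'a) set \<Rightarrow> (nat \<Rightarrow> 'a) \<Rightarrow> nat \<Rightarrow> bool" where
  "walk R p k \<longleftrightarrow> (\<forall>i<k. (p i, p (Suc i)) \<in> R)"

lemma walk_relpow:
  assumes "walk R p k" "a \<le> b" "b \<le> k"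
  shows "(p a, p b) \<in> R ^^ (b - a)"
proof -
  have "(p a, p (a + t)) \<in> R ^^ t" if "a + t \<le> k" for t
    using that
  proof (induction t)
    case 0 then show ?case by simp
  next
    case (Suc t)
    then have "(p a, p (a + t)) \<in> R ^^ t" by simp
    moreover have "(p (a + t), p (Suc (a + t))) \<in> R" using assms(1) Suc.prems unfolding walk_def by simp
    ultimately show ?case by auto
  qed
  from this[of "b - a"] show ?thesis using assms by simp
qed

lemma shortest_walk:
  assumes "(x,y) \<in> R\<^sup>*"
  obtains p k where "p 0 = x" "p k = y" "walk R p k"
    "\<And>i j. i < j \<Longrightarrow> j \<le> k \<Longrightarrow> p i \<noteq> p j"
    "\<And>i j. Suc i < j \<Longrightarrow> j \<le> k \<Longrightarrow> (p i, p j) \<notin> R"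
proof -
  obtain m where "(x,y) \<in> R ^^ m" using assms rtrancl_power by blast
  define k where "k = (LEAST m. (x,y) \<in> R ^^ m)"
  have k: "(x,y) \<in> R ^^ k" unfolding k_def using \<open>(x,y) \<in> R ^^ m\<close> by (rule LeastI)
  have kmin: "k \<le> m'" if "(x,y) \<in> R ^^ m'" for m' unfolding k_def using that by (rule Least_le)
  obtain p where p: "p 0 = x" "p k = y" "\<forall>i<k. (p i, p (Suc i)) \<in> R"
    using k relpow_fun_conv by metis
  have w: "walk R p k" using p(3) unfolding walk_def by blast
  have d1: "p i \<noteq> p j" if ij: "i < j" "j \<le> k" for i j
  proof
    assume eq: "p i = p j"
    have "(x, p i) \<in> R ^^ (i - 0)" using walk_relpow[OF w, of 0 i] ij p(1) by simp
    moreover have "(p j, y) \<in> R ^^ (k - j)" using walk_relpow[OF w, of j k] ij p(2) by simp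
    ultimately have "(x, y) \<in> R ^^ (i + (k - j))" using eq relpow_add by fastforce
    then have "k \<le> i + (k - j)" by (rule kmin)
    then show False using ij by linarith
  qed
  have d2: "(p i, p j) \<notin> R" if ij: "Suc i < j" "j \<le> k" for i j
  proof
    assume eq: "(p i, p j) \<in> R"
    have "(x, p i) \<in> R ^^ i" using walk_relpow[OF w, of 0 i] ij p(1) by simp
    moreover have "(p j, y) \<in> R ^^ (k - j)" using walk_relpow[OF w, of j k] ij p(2) by simp
    ultimately have "(x, y) \<in> R ^^ (i + 1 + (k - j))" using eq relpow_add by fastforce
    then have "k \<le> i + 1 + (k - j)" by (rule kmin)
    then show False using ij by linarith
  qed
  show ?thesis using that[OF p(1) p(2) w d1 d2] .
qed


lemma del_set:
  assumes "finite D" "D \<subseteq> V"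
  shows "minor_step\<^sup>*\<^sup>* (V, E) (V - D, {e \<in> E. e \<inter> D = {}})"
  using assms
proof (induction D rule: finite_induct)
  case empty then show ?case by simp
next
  case (insert d D)
  have IH: "minor_step\<^sup>*\<^sup>* (V, E) (V - D, {e \<in> E. e \<inter> D = {}})" using insert by blast
  have "d \<in> V - D" using insert by blast
  then have "minor_step (V - D, {e \<in> E. e \<inter> D = {}}) (V - D - {d}, {e \<in> {e \<in> E. e \<inter> D = {}}. d \<notin> e})"
    by (rule minor_step.del_vertex)
  moreover have "V - D - {d} = V - insert d D" by blast
  moreover have "{e \<in> {e \<in> E. e \<inter> D = {}}. d \<notin> e} = {e \<in> E. e \<inter> insert d D = {}}" by blast
  ultimately have "minor_step (V - D, {e \<in> E. e \<inter> D = {}}) (V - insert d D, {e \<in> E. e \<inter> insert d D = {}})"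
    by simp
  with IH show ?case by (rule rtranclp.rtrancl_into_rtrancl)
qed

lemma simple_edgeE: assumes "simple_graph V E" "e \<in> E" shows "\<exists>u v. u \<in> V \<and> v \<in> V \<and> u \<noteq> v \<and> e = {u, v}"
proof -
  have "\<forall>e\<in>E. \<exists>u v. u \<in> V \<and> v \<in> V \<and> u \<noteq> v \<and> e = {u, v}" using assms(1) unfolding simple_graph_def by (rule conjunct2)
  then show ?thesis using assms(2) by (rule bspec)
qed

lemma edge_sub: assumes "simple_graph V E" "e \<in> E" shows "e \<subseteq> V"
proof -
  have "\<forall>e\<in>E. \<exists>u v. u \<in> V \<and> v \<in> V \<and> u \<noteq> v \<and> e = {u, v}" using assms(1) unfolding simple_graph_def by (rule conjunct2)
  then obtain u v where "u \<in> V" "v \<in> V" "e = {u, v}" using assms(2) by blast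
  then show ?thesis by simp
qed

lemma induced_minor:
  assumes "simple_graph V E" "W \<subseteq> V"
  shows "is_minor (W, {e \<in> E. e \<subseteq> W}) (V, E)"
proof -
  have f: "finite V" using assms(1) unfolding simple_graph_def by blast
  have "minor_step\<^sup>*\<^sup>* (V, E) (V - (V - W), {e \<in> E. e \<inter> (V - W) = {}})"
    using del_set[of "V - W" V E] f by blast
  moreover have "V - (V - W) = W" using assms(2) by blast
  moreover have "{e \<in> E. e \<inter> (V - W) = {}} = {e \<in> E. e \<subseteq> W}"
  proof (rule Collect_cong)
    fix e
    show "(e \<in> E \<and> e \<inter> (V - W) = {}) = (e \<in> E \<and> e \<subseteq> W)"
      using edge_sub[OF assms(1), of e] by blast
  qed
  ultimately show ?thesis unfolding is_minor_def by simp
qed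

lemma clique5:
  assumes "simple_graph V E" "W \<subseteq> V" "card W = 5" "is_clique V E W"
  shows "has_K_minor 5 V E"
proof -
  have f: "finite W" using assms(1,2) unfolding simple_graph_def using finite_subset by blast
  have "complete_graph W {e \<in> E. e \<subseteq> W}"
    unfolding complete_graph_def
  proof
    show "{e \<in> E. e \<subseteq> W} \<subseteq> {{u, v} |u v. u \<in> W \<and> v \<in> W \<and> u \<noteq> v}"
    proof
      fix e assume e: "e \<in> {e \<in> E. e \<subseteq> W}"
      then obtain u v where "u \<noteq> v" "e = {u, v}" using simple_edgeE[OF assms(1)] by blast
      then show "e \<in> {{u, v} |u v. u \<in> W \<and> v \<in> W \<and> u \<noteq> v}" using e by blast
    qed
    show "{{u, v} |u v. u \<in> W \<and> v \<in> W \<and> u \<noteq> v} \<subseteq> {e \<in> E. e \<subseteq> W}"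
      using assms(4) unfolding is_clique_def by blast
  qed
  then show ?thesis unfolding has_K_minor_def using induced_minor[OF assms(1,2)] f assms(3) by blast
qed

lemma minor_trans:
  assumes "minor_step\<^sup>*\<^sup>* G H" "has_K_minor n (fst H) (snd H)" shows "has_K_minor n (fst G) (snd G)"
proof -
  obtain V' E' where m: "minor_step\<^sup>*\<^sup>* (fst H, snd H) (V', E')" "finite V'" "card V' = n" "complete_graph V' E'"
    using assms(2) unfolding has_K_minor_def is_minor_def by blast
  have "minor_step\<^sup>*\<^sup>* G (V', E')" using assms(1) m(1) by simp
  then have "minor_step\<^sup>*\<^sup>* (fst G, snd G) (V', E')" by simp
  then show ?thesis unfolding has_K_minor_def is_minor_def using m(2-4) by blast
qed

lemma contract_K5:
  assumes "simple_graph V E" "W \<subseteq> V" "card W = 4" "is_clique V E W" "C \<subseteq> V" "C \<noteq> {}"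
    "C \<inter> W = {}" "connset E C" "\<forall>s\<in>W. \<exists>z\<in>C. {s,z} \<in> E"
  shows "has_K_minor 5 V E"
  using assms
proof (induction "card C" arbitrary: V E C rule: less_induct)
  case less
  have fV: "finite V" using less.prems(1) unfolding simple_graph_def by blast
  have fC: "finite C" using finite_subset[OF less.prems(5) fV] .
  have eo: "edges_ok V E" using less.prems(1) by (rule simple_edges_ok)
  show ?case
  proof (cases "\<exists>v. C = {v}")
    case True
    then obtain v where v: "C = {v}" by blast
    have vW: "v \<notin> W" using v less.prems(7) by blast
    have fW: "finite W" using finite_subset[OF less.prems(2) fV] .
    have "card (insert v W) = 5" using vW fW less.prems(3) by simp
    moreover have "insert v W \<subseteq> V" using v less.prems(2,5) by blast
    moreover have "is_clique V E (insert v W)"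
      unfolding is_clique_def
    proof (intro conjI ballI impI)
      show "insert v W \<subseteq> V" using v less.prems(2,5) by blast
      fix x y assume xy: "x \<in> insert v W" "y \<in> insert v W" "x \<noteq> y"
      have vn: "{s,v} \<in> E" if "s \<in> W" for s using less.prems(9) that v by blast
      show "{x,y} \<in> E"
      proof (cases "x = v")
        case True
        have vn': "{v,s} \<in> E" if "s \<in> W" for s using vn[OF that] by (metis insert_commute)
        show ?thesis using xy vn' True by auto
      next
        case False
        show ?thesis
        proof (cases "y = v")
          case True then show ?thesis using xy vn False by auto
        next
          case False
          then show ?thesis using xy \<open>x \<noteq> v\<close> less.prems(4) unfolding is_clique_def by blast
        qed
      qed
    qed
    ultimately show ?thesis using clique5[OF less.prems(1)] by blast
  next
    case False
    obtain u0 where u0: "u0 \<in> C" using less.prems(6) by blast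
    obtain w0 where w0: "w0 \<in> C" "w0 \<noteq> u0" using False u0 by blast
    have "(u0, w0) \<in> (rel E C)\<^sup>*" using less.prems(8) u0 w0 unfolding connset_def by blast
    then obtain w where "(u0, w) \<in> rel E C" using w0(2) by (metis converse_rtranclE)
    then have uw: "{u0, w} \<in> E" "w \<in> C" unfolding rel_def by auto
    define u where "u = u0"
    have uwne: "u \<noteq> w" using edges_okD[OF eo uw(1)] unfolding u_def by blast
    have uC: "u \<in> C" using u0 unfolding u_def .
    define E' where "E' = {e \<in> E. w \<notin> e} \<union> {{u, x} |x. {w, x} \<in> E \<and> x \<noteq> u}"
    have st: "minor_step (V, E) (V - {w}, E')"
      unfolding E'_def using minor_step.contract[of u w E V] uw uwne unfolding u_def by blast
    have eo': "edges_ok (V - {w}) E'" using step_edges_ok[OF st] eo by simp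
    have s': "simple_graph (V - {w}) E'" using eo' fV unfolding simple_graph_def edges_ok_def by blast
    have wW: "w \<notin> W" using uw(2) less.prems(7) by blast
    define C' where "C' = C - {w}"
    have cardlt: "card C' < card C" unfolding C'_def using card_Diff1_less[OF fC uw(2)] .
    have W': "W \<subseteq> V - {w}" using less.prems(2) wW by blast
    have cl': "is_clique (V - {w}) E' W"
      using less.prems(4) wW W' unfolding is_clique_def E'_def by blast
    have C'sub: "C' \<subseteq> V - {w}" using less.prems(5) unfolding C'_def by blast
    have C'ne: "C' \<noteq> {}" using uC uwne unfolding C'_def by blast
    have C'W: "C' \<inter> W = {}" using less.prems(7) unfolding C'_def by blast
    define f where "f z = (if z = w then u else z)" for z
    have fC': "f z \<in> C'" if "z \<in> C" for z using that uC uwne unfolding f_def C'_def by auto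
    have fstep: "(f z, f z') \<in> (rel E' C')\<^sup>*" if "(z, z') \<in> rel E C" for z z'
    proof -
      have zz: "{z,z'} \<in> E" "z \<in> C" "z' \<in> C" using that unfolding rel_def by auto
      have ne: "z \<noteq> z'" using edges_okD[OF eo zz(1)] by blast
      consider "z \<noteq> w" "z' \<noteq> w" | "z' = w" | "z = w" by blast
      then show ?thesis
      proof cases
        case 1
        then have "{z,z'} \<in> E'" using zz unfolding E'_def by blast
        then have "(f z, f z') \<in> rel E' C'" using 1 zz unfolding rel_def f_def C'_def by auto
        then show ?thesis by blast
      next
        case 2
        then have zw: "z \<noteq> w" using ne by blast
        show ?thesis
        proof (cases "z = u")
          case True then show ?thesis using 2 unfolding f_def by simp
        next
          case False
          have "{w, z} \<in> E" using zz(1) 2 by (simp add: insert_commute)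
          then have "{u, z} \<in> E'" using False unfolding E'_def by blast
          then have "{z, u} \<in> E'" by (simp add: insert_commute)
          then have "(f z, f z') \<in> rel E' C'" using 2 zw zz fC' uC uwne unfolding rel_def f_def C'_def by auto
          then show ?thesis by blast
        qed
      next
        case 3
        then have zw: "z' \<noteq> w" using ne by blast
        show ?thesis
        proof (cases "z' = u")
          case True then show ?thesis using 3 unfolding f_def by simp
        next
          case False
          have "{w, z'} \<in> E" using zz(1) 3 by simp
          then have "{u, z'} \<in> E'" using False unfolding E'_def by blast
          then have "(f z, f z') \<in> rel E' C'" using 3 zw zz fC' uC uwne unfolding rel_def f_def C'_def by auto
          then show ?thesis by blast
        qed
      qed
    qed
    have fpath: "(f x, f y) \<in> (rel E' C')\<^sup>*" if "(x, y) \<in> (rel E C)\<^sup>*" for x y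
      using that
    proof (induction rule: rtrancl_induct)
      case base then show ?case by simp
    next
      case (step y z) then show ?case using fstep by (meson rtrancl_trans)
    qed
    have conn': "connset E' C'"
      unfolding connset_def
    proof (intro ballI)
      fix x y assume xy: "x \<in> C'" "y \<in> C'"
      then have "(x, y) \<in> (rel E C)\<^sup>*" using less.prems(8) unfolding connset_def C'_def by blast
      then have "(f x, f y) \<in> (rel E' C')\<^sup>*" by (rule fpath)
      moreover have "f x = x" "f y = y" using xy unfolding f_def C'_def by auto
      ultimately show "(x, y) \<in> (rel E' C')\<^sup>*" by simp
    qed
    have nb': "\<forall>s\<in>W. \<exists>z\<in>C'. {s,z} \<in> E'"
    proof
      fix s assume s: "s \<in> W"
      obtain z where z: "z \<in> C" "{s,z} \<in> E" using less.prems(9) s by blast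
      have sw: "s \<noteq> w" "s \<noteq> u" using s wW uC less.prems(7) by blast+
      show "\<exists>z\<in>C'. {s,z} \<in> E'"
      proof (cases "z = w")
        case False
        then have "{s,z} \<in> E'" using z sw unfolding E'_def by blast
        then show ?thesis using z False unfolding C'_def by blast
      next
        case True
        then have "{w, s} \<in> E" using z by (simp add: insert_commute)
        then have "{u, s} \<in> E'" using sw unfolding E'_def by blast
        then have "{s, u} \<in> E'" by (simp add: insert_commute)
        then show ?thesis using uC uwne unfolding C'_def by blast
      qed
    qed
    have "has_K_minor 5 (V - {w}) E'"
      using less.hyps[OF cardlt s' W' less.prems(3) cl' C'sub C'ne C'W conn' nb'] by blast
    moreover have "minor_step\<^sup>*\<^sup>* (V, E) (V - {w}, E')" using st by (rule r_into_rtranclp)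
    ultimately show ?thesis using minor_trans[of "(V,E)" "(V - {w}, E')" 5] by simp
  qed
qed


lemma fun_cycle:
  assumes n: "3 \<le> n" and inj: "\<And>i j. i < j \<Longrightarrow> j < n \<Longrightarrow> c i \<noteq> c j"
    and V: "\<And>i. i < n \<Longrightarrow> c i \<in> V" and E: "\<And>i. i < n \<Longrightarrow> {c i, c (Suc i mod n)} \<in> E"
  shows "is_cycle V E (map c [0..<n])"
    and "\<And>i. i < n \<Longrightarrow> {c i, c (Suc i mod n)} \<in> cycle_edges (map c [0..<n])"
    and "(\<And>i j. i < n \<Longrightarrow> j < n \<Longrightarrow> {c i, c j} \<in> E \<Longrightarrow> j = Suc i mod n \<or> i = Suc j mod n)
         \<Longrightarrow> chordless E (map c [0..<n])"
proof -
  let ?cs = "map c [0..<n]"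
  have len: "length ?cs = n" by simp
  have nth: "?cs ! i = c i" if "i < n" for i using that by simp
  have m: "Suc i mod n < n" for i using n by simp
  have dist: "distinct ?cs"
    unfolding distinct_conv_nth
  proof (intro allI impI)
    fix i j assume ij: "i < length ?cs" "j < length ?cs" "i \<noteq> j"
    then show "?cs ! i \<noteq> ?cs ! j" using inj[of i j] inj[of j i] nth by (cases "i < j") auto
  qed
  have sV: "set ?cs \<subseteq> V" using V by auto
  have ed: "\<forall>i < length ?cs. {?cs ! i, ?cs ! ((i + 1) mod length ?cs)} \<in> E"
    using E nth m by simp
  show "is_cycle V E ?cs" unfolding is_cycle_def using n dist sV ed len by simp
  show "{c i, c (Suc i mod n)} \<in> cycle_edges ?cs" if "i < n" for i
  proof -
    have "{?cs ! i, ?cs ! ((i + 1) mod length ?cs)} = {c i, c (Suc i mod n)}" using that nth m by simp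
    then show ?thesis unfolding cycle_edges_def using that len by (metis (mono_tags, lifting) mem_Collect_eq)
  qed
  note ce = this
  assume ch: "\<And>i j. i < n \<Longrightarrow> j < n \<Longrightarrow> {c i, c j} \<in> E \<Longrightarrow> j = Suc i mod n \<or> i = Suc j mod n"
  show "chordless E ?cs" unfolding chordless_def
  proof (intro ballI impI)
    fix x y assume xy: "x \<in> set ?cs" "y \<in> set ?cs" "{x,y} \<in> E"
    obtain i where i: "i < n" "x = c i" using xy(1) by auto
    obtain j where j: "j < n" "y = c j" using xy(2) by auto
    have "j = Suc i mod n \<or> i = Suc j mod n" using ch[OF i(1) j(1)] xy(3) i j by simp
    then show "{x,y} \<in> cycle_edges ?cs"
    proof
      assume "j = Suc i mod n" then show ?thesis using ce[OF i(1)] i j by simp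
    next
      assume "i = Suc j mod n" then have "{y,x} \<in> cycle_edges ?cs" using ce[OF j(1)] i j by simp
      then show ?thesis by (simp add: insert_commute)
    qed
  qed
qed

lemma altpath:
  assumes s: "simple_graph V E" and e: "{x,y} \<in> E"
    and p: "(x, y) \<in> {(a,b). {a,b} \<in> E \<and> {a,b} \<noteq> {x,y}}\<^sup>*"
  shows "\<exists>cs. is_cycle V E cs \<and> {x,y} \<in> cycle_edges cs"
    and "chordal V E \<Longrightarrow> \<exists>z. {x,z} \<in> E \<and> {y,z} \<in> E \<and> z \<noteq> x \<and> z \<noteq> y"
proof -
  let ?R = "{(a,b). {a,b} \<in> E \<and> {a,b} \<noteq> {x,y}}"
  have eo: "edges_ok V E" using s by (rule simple_edges_ok)
  have xy: "x \<in> V" "y \<in> V" "x \<noteq> y" using edges_okD[OF eo e] by auto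
  obtain p k where p0: "p 0 = x" and pk: "p k = y" and w: "walk ?R p k"
    and d1: "\<And>i j. i < j \<Longrightarrow> j \<le> k \<Longrightarrow> p i \<noteq> p j"
    and d2: "\<And>i j. Suc i < j \<Longrightarrow> j \<le> k \<Longrightarrow> (p i, p j) \<notin> ?R"
    using shortest_walk[OF p] by blast
  have k0: "k \<noteq> 0"
  proof
    assume "k = 0" then have "x = y" using p0 pk by simp
    then show False using xy by simp
  qed
  have k1: "k \<noteq> 1"
  proof
    assume "k = 1"
    then have "(p 0, p (Suc 0)) \<in> ?R" using w unfolding walk_def by simp
    then show False using p0 pk \<open>k = 1\<close> by simp
  qed
  have k2: "2 \<le> k" using k0 k1 by linarith
  define n where "n = Suc k"
  have n3: "3 \<le> n" using k2 unfolding n_def by simp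
  have stepE: "{p i, p (Suc i)} \<in> E" if "i < k" for i using w that unfolding walk_def by blast
  have inj: "p i \<noteq> p j" if "i < j" "j < n" for i j using d1 that unfolding n_def by simp
  have pV: "p i \<in> V" if "i < n" for i
  proof (cases "i < k")
    case True then show ?thesis using edges_okD[OF eo stepE[OF True]] by blast
  next
    case False then have "i = k" using that unfolding n_def by simp
    then show ?thesis using pk xy by simp
  qed
  have pE: "{p i, p (Suc i mod n)} \<in> E" if "i < n" for i
  proof (cases "i < k")
    case True then have "Suc i mod n = Suc i" unfolding n_def by simp
    then show ?thesis using stepE[OF True] by simp
  next
    case False then have "i = k" using that unfolding n_def by simp
    then have "Suc i mod n = 0" unfolding n_def by simp
    then show ?thesis using \<open>i = k\<close> p0 pk e by (simp add: insert_commute)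
  qed
  have half: "j = Suc i mod n \<or> i = Suc j mod n" if ij: "i < j" "j < n" "{p i, p j} \<in> E" for i j
  proof (cases "j = Suc i")
    case True then show ?thesis using ij unfolding n_def by simp
  next
    case False
    then have sij: "Suc i < j" "j \<le> k" using ij unfolding n_def by auto
    show ?thesis
    proof (cases "{p i, p j} = {x,y}")
      case False then show ?thesis using d2[OF sij] ij(3) by blast
    next
      case True
      then have "p i = p 0 \<or> p i = p k" "p j = p 0 \<or> p j = p k" using p0 pk by (metis doubleton_eq_iff)+
      then have pi: "p i = p 0 \<or> p i = p k" and pj: "p j = p 0 \<or> p j = p k" by blast+
      have ik: "i < k" using sij by linarith
      have "p i \<noteq> p k" using d1[OF ik] by simp
      then have "p i = p 0" using pi by blast
      then have i0: "i = 0" using d1[of 0 i] ik by (cases i) auto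
      have j0: "0 < j" using sij by linarith
      have "p 0 \<noteq> p j" using d1[OF j0 sij(2)] .
      then have "p j = p k" using pj by metis
      then have "j = k" using d1[of j k] sij(2) by (cases "j < k") auto
      then have "i = 0" "j = k" using i0 by auto
      then show ?thesis unfolding n_def by simp
    qed
  qed
  have ch: "j = Suc i mod n \<or> i = Suc j mod n" if ij: "i < n" "j < n" "{p i, p j} \<in> E" for i j
  proof -
    consider "i < j" | "j < i" | "i = j" by linarith
    then show ?thesis
    proof cases
      case 1 then show ?thesis using half ij by blast
    next
      case 2 then have "{p j, p i} \<in> E" using ij(3) by (simp add: insert_commute)
      then show ?thesis using half[OF 2 ij(1)] by blast
    next
      case 3 then have "{p i} \<in> E" using ij(3) by simp
      then show ?thesis using edges_okD[OF eo, of "p i" "p i"] by simp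
    qed
  qed
  have cyc: "is_cycle V E (map p [0..<n])" using fun_cycle(1)[of n p V E, OF n3 inj pV pE] by blast
  have "{p k, p (Suc k mod n)} \<in> cycle_edges (map p [0..<n])"
    using fun_cycle(2)[of n p V E, OF n3 inj pV pE, of k] unfolding n_def by simp
  moreover have "{p k, p (Suc k mod n)} = {x,y}" using p0 pk unfolding n_def by (simp add: insert_commute)
  ultimately show "\<exists>cs. is_cycle V E cs \<and> {x,y} \<in> cycle_edges cs" using cyc by auto
  assume chd: "chordal V E"
  have cl: "chordless E (map p [0..<n])" using fun_cycle(3)[of n p V E, OF n3 inj pV pE] ch by blast
  have "\<not> 4 \<le> n" using chordalD[OF chd cyc _ cl] by auto
  then have "k = 2" using k2 unfolding n_def by simp
  then have "{x, p 1} \<in> E" "{p 1, p 2} \<in> E" using stepE[of 0] stepE[of 1] p0 by (simp_all add: numeral_2_eq_2)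
  then have "{x, p 1} \<in> E" "{p 1, y} \<in> E" using pk \<open>k = 2\<close> by simp_all
  moreover have "p 1 \<noteq> x" "p 1 \<noteq> y" using inj[of 0 1] inj[of 1 2] p0 pk \<open>k = 2\<close> unfolding n_def by auto
  ultimately show "\<exists>z. {x,z} \<in> E \<and> {y,z} \<in> E \<and> z \<noteq> x \<and> z \<noteq> y" by (metis insert_commute)
qed

lemma sym_rt:
  assumes "\<And>a b. (a,b) \<in> S \<Longrightarrow> (b,a) \<in> S" "(a,b) \<in> S\<^sup>*"
  shows "(b,a) \<in> S\<^sup>*"
  using assms(2)
proof (induction rule: rtrancl_induct)
  case base then show ?case by simp
next
  case (step y z)
  then have "(z,y) \<in> S" using assms(1) by blast
  then show ?case using step(3) by (rule converse_rtrancl_into_rtrancl)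
qed

lemma cycle_altpath:
  assumes c: "is_cycle V E cs" and e: "{x,y} \<in> cycle_edges cs"
  shows "(x, y) \<in> {(a,b). {a,b} \<in> E \<and> {a,b} \<noteq> {x,y}}\<^sup>*"
proof -
  let ?n = "length cs"
  have n: "3 \<le> ?n" using c unfolding is_cycle_def by blast
  have n0: "0 < ?n" "1 < ?n" "2 < ?n" using n by linarith+
  obtain i where i: "i < ?n" "{x,y} = {cs ! i, cs ! ((i + 1) mod ?n)}"
    using e unfolding cycle_edges_def by blast
  define c where "c = rc cs i"
  have c0: "c 0 = cs ! i" unfolding c_def rc_def using i by simp
  have c1: "c 1 = cs ! ((i + 1) mod ?n)" unfolding c_def rc_def by simp
  have cn: "c ?n = c 0" unfolding c_def by (rule rc_period)
  let ?R = "{(a,b). {a,b} \<in> E \<and> {a,b} \<noteq> {c 0, c 1}}"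
  have ci: "c a \<noteq> c b" if "a < ?n" "b < ?n" "a \<noteq> b" for a b
    using rc_inj[OF c that(1,2)] that(3) unfolding c_def by blast
  have wk: "(c 1, c (Suc t)) \<in> ?R\<^sup>*" if "t < ?n" for t
    using that
  proof (induction t)
    case 0 then show ?case by simp
  next
    case (Suc t)
    have ed: "{c (Suc t), c (Suc (Suc t))} \<in> E" unfolding c_def by (rule rc_edge[OF c])
    have st: "Suc t < ?n" using Suc.prems .
    have a0: "c (Suc t) \<noteq> c 0" using ci[OF st n0(1)] by simp
    have ne: "{c (Suc t), c (Suc (Suc t))} \<noteq> {c 0, c 1}"
    proof (cases "t = 0")
      case True
      have "c 2 \<noteq> c 0" "c 2 \<noteq> c 1" using ci[OF n0(3) n0(1)] ci[OF n0(3) n0(2)] by auto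
      then show ?thesis using True by (auto simp: doubleton_eq_iff numeral_2_eq_2)
    next
      case False
      have "c (Suc t) \<noteq> c 1" using ci[OF st n0(2)] False by simp
      then show ?thesis using a0 by (auto simp: doubleton_eq_iff)
    qed
    have "(c (Suc t), c (Suc (Suc t))) \<in> ?R" using ed ne by blast
    moreover have "(c 1, c (Suc t)) \<in> ?R\<^sup>*" using Suc.IH st by simp
    ultimately show ?case by (meson rtrancl.rtrancl_into_rtrancl)
  qed
  have "(c 1, c (Suc (?n - 1))) \<in> ?R\<^sup>*" using wk[of "?n - 1"] n by simp
  moreover have "Suc (?n - 1) = ?n" using n by simp
  ultimately have p10: "(c 1, c 0) \<in> ?R\<^sup>*" using cn by simp
  have symR: "(b,a) \<in> ?R" if "(a,b) \<in> ?R" for a b using that by (auto simp: insert_commute)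
  have p01: "(c 0, c 1) \<in> ?R\<^sup>*" using sym_rt[OF symR p10] by blast
  have xy: "{x,y} = {c 0, c 1}" using i c0 c1 by simp
  then have "(x = c 0 \<and> y = c 1) \<or> (x = c 1 \<and> y = c 0)" by (metis doubleton_eq_iff)
  then show ?thesis using p10 p01 xy by auto
qed

lemma bridgeless_tri:
  assumes s: "simple_graph V E" and ch: "chordal V E" and b: "bridgeless V E" and e: "{x,y} \<in> E"
  shows "\<exists>z. {x,z} \<in> E \<and> {y,z} \<in> E \<and> z \<noteq> x \<and> z \<noteq> y"
proof -
  obtain cs where "is_cycle V E cs" "{x,y} \<in> cycle_edges cs"
    using b e unfolding bridgeless_def is_bridge_def by blast
  then have "(x, y) \<in> {(a,b). {a,b} \<in> E \<and> {a,b} \<noteq> {x,y}}\<^sup>*" by (rule cycle_altpath)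
  then show ?thesis using altpath(2)[OF s e] ch by blast
qed


lemma relD: "(a,b) \<in> rel E B \<Longrightarrow> {a,b} \<in> E \<and> a \<in> B \<and> b \<in> B"
  by (simp add: rel_def)

lemma walkD: "walk R p k \<Longrightarrow> i < k \<Longrightarrow> (p i, p (Suc i)) \<in> R"
  by (simp add: walk_def)

lemma sp_walk:
  assumes s: "simple_graph V E" and xy: "x \<noteq> y" "{x,y} \<notin> E"
    and path: "(x,y) \<in> (rel E (C \<union> {x,y}))\<^sup>*"
  obtains p m where "p 0 = x" "p m = y" "2 \<le> m" "walk (rel E (C \<union> {x,y})) p m"
    "\<And>i j. i < j \<Longrightarrow> j \<le> m \<Longrightarrow> p i \<noteq> p j"
    "\<And>i j. Suc i < j \<Longrightarrow> j \<le> m \<Longrightarrow> (p i, p j) \<notin> rel E (C \<union> {x,y})"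
    "\<And>t. t \<le> m \<Longrightarrow> p t \<in> C \<union> {x,y}"
    "\<And>t. 0 < t \<Longrightarrow> t < m \<Longrightarrow> p t \<in> C"
    "\<And>t. t \<le> m \<Longrightarrow> p t \<in> V"
proof -
  let ?R = "rel E (C \<union> {x,y})"
  obtain p m where p0: "p 0 = x" and pm: "p m = y" and w: "walk ?R p m"
    and d1: "\<And>i j. i < j \<Longrightarrow> j \<le> m \<Longrightarrow> p i \<noteq> p j"
    and d2: "\<And>i j. Suc i < j \<Longrightarrow> j \<le> m \<Longrightarrow> (p i, p j) \<notin> ?R"
    using shortest_walk[OF path] by blast
  have eo: "edges_ok V E" using s by (rule simple_edges_ok)
  have m0: "m \<noteq> 0"
  proof
    assume "m = 0" then show False using p0 pm xy by simp
  qed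
  have m1: "m \<noteq> 1"
  proof
    assume "m = 1"
    then have "(p 0, p (Suc 0)) \<in> ?R" using w unfolding walk_def by simp
    then show False using p0 pm \<open>m = 1\<close> xy unfolding rel_def by simp
  qed
  have m2: "2 \<le> m" using m0 m1 by linarith
  have inC: "p t \<in> C \<union> {x,y}" if "t \<le> m" for t
  proof (cases "t < m")
    case True then show ?thesis using w unfolding walk_def rel_def by blast
  next
    case False then show ?thesis using that pm by simp
  qed
  have inner: "p t \<in> C" if "0 < t" "t < m" for t
  proof -
    have "p t \<noteq> x" using d1[of 0 t] that p0 by simp
    moreover have "p t \<noteq> y" using d1[of t m] that pm by simp
    ultimately show ?thesis using inC[of t] that by simp
  qed
  have inV: "p t \<in> V" if "t \<le> m" for t
  proof (cases "t < m")
    case True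
    then have "{p t, p (Suc t)} \<in> E" using relD[OF walkD[OF w True]] by simp
    from edges_okD[OF eo this] show ?thesis by simp
  next
    case False
    then have "t = m" using that by simp
    have "m - 1 < m" using m0 by simp
    then have "{p (m - 1), p (Suc (m - 1))} \<in> E" using relD[OF walkD[OF w]] by blast
    from edges_okD[OF eo this] show ?thesis using m0 \<open>t = m\<close> by simp
  qed
  show ?thesis using that[OF p0 pm m2 w d1 d2 inC inner inV] .
qed

lemma dirac_core:
  assumes s: "simple_graph V E" and ch: "chordal V E"
    and xy: "x \<noteq> y" "{x,y} \<notin> E"
    and dAB: "CA \<inter> CB = {}" and xA: "x \<notin> CA" "y \<notin> CA" and xB: "x \<notin> CB" "y \<notin> CB"
    and noe: "\<And>u v. u \<in> CA \<Longrightarrow> v \<in> CB \<Longrightarrow> {u,v} \<notin> E"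
    and pA: "(x,y) \<in> (rel E (CA \<union> {x,y}))\<^sup>*" and pB: "(x,y) \<in> (rel E (CB \<union> {x,y}))\<^sup>*"
  shows False
proof -
  have eo: "edges_ok V E" using s by (rule simple_edges_ok)
  obtain p m where p0: "p 0 = x" and pm: "p m = y" and m2: "2 \<le> m" and wp: "walk (rel E (CA \<union> {x,y})) p m"
    and d1p: "\<And>i j. i < j \<Longrightarrow> j \<le> m \<Longrightarrow> p i \<noteq> p j"
    and d2p: "\<And>i j. Suc i < j \<Longrightarrow> j \<le> m \<Longrightarrow> (p i, p j) \<notin> rel E (CA \<union> {x,y})"
    and pin: "\<And>t. t \<le> m \<Longrightarrow> p t \<in> CA \<union> {x,y}"
    and pinner: "\<And>t. 0 < t \<Longrightarrow> t < m \<Longrightarrow> p t \<in> CA"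
    and pV: "\<And>t. t \<le> m \<Longrightarrow> p t \<in> V"
    using sp_walk[OF s xy pA] by blast
  obtain q l where q0: "q 0 = x" and ql: "q l = y" and l2: "2 \<le> l" and wq: "walk (rel E (CB \<union> {x,y})) q l"
    and d1q: "\<And>i j. i < j \<Longrightarrow> j \<le> l \<Longrightarrow> q i \<noteq> q j"
    and d2q: "\<And>i j. Suc i < j \<Longrightarrow> j \<le> l \<Longrightarrow> (q i, q j) \<notin> rel E (CB \<union> {x,y})"
    and qin: "\<And>t. t \<le> l \<Longrightarrow> q t \<in> CB \<union> {x,y}"
    and qinner: "\<And>t. 0 < t \<Longrightarrow> t < l \<Longrightarrow> q t \<in> CB"
    and qV: "\<And>t. t \<le> l \<Longrightarrow> q t \<in> V"
    using sp_walk[OF s xy pB] by blast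
  define n where "n = m + l"
  define c where "c t = (if t \<le> m then p t else q (n - t))" for t
  have n4: "4 \<le> n" and n3: "3 \<le> n" using m2 l2 unfolding n_def by linarith+
  have cp: "c t = p t" if "t \<le> m" for t using that unfolding c_def by simp
  have cq: "c t = q (n - t)" if "m \<le> t" "t \<le> n" for t
  proof (cases "t = m")
    case True then show ?thesis unfolding c_def n_def using pm ql by simp
  next
    case False then show ?thesis using that unfolding c_def by simp
  qed
  have c0: "c 0 = q (n - n)" using cp[of 0] p0 q0 by simp
  have pE: "{p i, p j} \<in> E \<Longrightarrow> i \<le> m \<Longrightarrow> j \<le> m \<Longrightarrow> (p i, p j) \<in> rel E (CA \<union> {x,y})" for i j
    using pin unfolding rel_def by blast
  have qE: "{q i, q j} \<in> E \<Longrightarrow> i \<le> l \<Longrightarrow> j \<le> l \<Longrightarrow> (q i, q j) \<in> rel E (CB \<union> {x,y})" for i j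
    using qin unfolding rel_def by blast
  have inj: "c i \<noteq> c j" if ij: "i < j" "j < n" for i j
  proof (cases "j \<le> m")
    case True then show ?thesis using d1p[OF ij(1) True] cp ij by simp
  next
    case jm: False
    show ?thesis
    proof (cases "m < i")
      case True
      have lt: "n - j < n - i" "n - i \<le> l" using ij True unfolding n_def by linarith+
      have "c i = q (n - i)" using cq[of i] True ij by simp
      moreover have "c j = q (n - j)" using cq[of j] jm ij by simp
      ultimately show ?thesis using d1q[OF lt] by simp
    next
      case False
      have cj: "c j = q (n - j)" using cq[of j] jm ij by simp
      have "0 < n - j" "n - j < l" using ij jm unfolding n_def by linarith+
      then have "c j \<in> CB" using cj qinner by simp
      moreover have "c i \<in> CA \<union> {x,y}" using cp[of i] pin[of i] False by simp
      then have "c i \<notin> CB" using dAB xB by auto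
      ultimately show ?thesis by auto
    qed
  qed
  have cV: "c i \<in> V" if "i < n" for i
  proof (cases "i \<le> m")
    case True then show ?thesis using cp pV by simp
  next
    case False then show ?thesis using cq[of i] qV[of "n - i"] that unfolding n_def by simp
  qed
  have cE: "{c i, c (Suc i mod n)} \<in> E" if i: "i < n" for i
  proof (cases "i < m")
    case True
    have "Suc i mod n = Suc i" using True l2 unfolding n_def by simp
    moreover have "{p i, p (Suc i)} \<in> E" using relD[OF walkD[OF wp True]] by simp
    ultimately show ?thesis using cp[of i] cp[of "Suc i"] True by simp
  next
    case False
    have ci: "c i = q (n - i)" using cq[of i] False i by simp
    have cs: "c (Suc i mod n) = q (n - Suc i)"
    proof (cases "Suc i < n")
      case True then show ?thesis using cq[of "Suc i"] False by simp
    next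
      case False then have "Suc i = n" using i by simp
      then show ?thesis using c0 by simp
    qed
    have idx: "n - Suc i < l" "Suc (n - Suc i) = n - i" using i False unfolding n_def by linarith+
    have "{q (n - Suc i), q (Suc (n - Suc i))} \<in> E" using relD[OF walkD[OF wq idx(1)]] by simp
    then have "{q (n - Suc i), q (n - i)} \<in> E" using idx(2) by simp
    then show ?thesis using ci cs by (simp add: insert_commute)
  qed
  have half: "j = Suc i mod n \<or> i = Suc j mod n" if ij: "i < j" "j < n" "{c i, c j} \<in> E" for i j
  proof (cases "j \<le> m")
    case True
    have "(p i, p j) \<in> rel E (CA \<union> {x,y})" using pE ij(3) cp ij(1) True by simp
    then have "\<not> Suc i < j" using d2p True by blast
    then have "j = Suc i" using ij(1) by simp
    then show ?thesis using ij(2) by simp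
  next
    case jm: False
    have cj: "c j = q (n - j)" using cq[of j] jm ij by simp
    have jl: "0 < n - j" "n - j < l" using ij jm unfolding n_def by linarith+
    show ?thesis
    proof (cases "m \<le> i")
      case True
      have ci: "c i = q (n - i)" using cq[of i] True ij by simp
      have il: "n - i \<le> l" "n - j < n - i" using True ij unfolding n_def by linarith+
      have "{q (n - j), q (n - i)} \<in> E" using ij(3) ci cj by (simp add: insert_commute)
      then have "(q (n - j), q (n - i)) \<in> rel E (CB \<union> {x,y})" using qE jl il by simp
      then have "\<not> Suc (n - j) < n - i" using d2q il by blast
      then have "j = Suc i" using il ij unfolding n_def by linarith
      then show ?thesis using ij(2) by simp
    next
      case False
      show ?thesis
      proof (cases "i = 0")
        case True
        have "c i = q 0" using True c0 by simp
        then have "{q (n - j), q 0} \<in> E" using ij(3) cj by (simp add: insert_commute)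
        then have "{q 0, q (n - j)} \<in> E" by (simp add: insert_commute)
        then have "(q 0, q (n - j)) \<in> rel E (CB \<union> {x,y})" using qE jl by simp
        then have "\<not> Suc 0 < n - j" using d2q[of 0 "n - j"] jl(2) by auto
        then have "Suc j = n" using jl ij unfolding n_def by linarith
        then show ?thesis using True by simp
      next
        case i0: False
        have "c i \<in> CA" using cp[of i] pinner[of i] False i0 by simp
        moreover have "c j \<in> CB" using cj qinner jl by simp
        ultimately show ?thesis using noe ij(3) by blast
      qed
    qed
  qed
  have chd: "j = Suc i mod n \<or> i = Suc j mod n" if ij: "i < n" "j < n" "{c i, c j} \<in> E" for i j
  proof -
    consider "i < j" | "j < i" | "i = j" by linarith
    then show ?thesis
    proof cases
      case 1 then show ?thesis using half ij by blast
    next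
      case 2 then have "{c j, c i} \<in> E" using ij(3) by (simp add: insert_commute)
      then show ?thesis using half[OF 2 ij(1)] by blast
    next
      case 3 then have "{c i} \<in> E" using ij(3) by simp
      then show ?thesis using edges_okD[OF eo, of "c i" "c i"] by simp
    qed
  qed
  have cyc: "is_cycle V E (map c [0..<n])" using fun_cycle(1)[of n c V E, OF n3 inj cV cE] by blast
  have cl: "chordless E (map c [0..<n])" using fun_cycle(3)[of n c V E, OF n3 inj cV cE] chd by blast
  show False using chordalD[OF ch cyc _ cl] n4 by simp
qed


lemma induced_simple:
  assumes s: "simple_graph V E" and W: "W \<subseteq> V"
  shows "simple_graph W {e \<in> E. e \<subseteq> W}"
proof -
  have f: "finite W" using s W finite_subset unfolding simple_graph_def by blast
  have "\<forall>e\<in>{e \<in> E. e \<subseteq> W}. \<exists>u v. u \<in> W \<and> v \<in> W \<and> u \<noteq> v \<and> e = {u, v}"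
  proof
    fix e assume e: "e \<in> {e \<in> E. e \<subseteq> W}"
    then obtain u v where "u \<noteq> v" "e = {u, v}" using simple_edgeE[OF s] by blast
    then show "\<exists>u v. u \<in> W \<and> v \<in> W \<and> u \<noteq> v \<and> e = {u, v}" using e by blast
  qed
  then show ?thesis unfolding simple_graph_def using f by blast
qed

lemma induced_chordal:
  assumes ch: "chordal V E" and W: "W \<subseteq> V"
  shows "chordal W {e \<in> E. e \<subseteq> W}"
proof (rule ccontr)
  assume "\<not> chordal W {e \<in> E. e \<subseteq> W}"
  then obtain cs where c: "is_cycle W {e \<in> E. e \<subseteq> W} cs" "length cs \<ge> 4" "chordless {e \<in> E. e \<subseteq> W} cs"
    unfolding chordal_def chordless_def by blast
  have c1: "is_cycle V E cs" using c(1) W unfolding is_cycle_def by blast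
  have sW: "set cs \<subseteq> W" using c(1) unfolding is_cycle_def by blast
  have "chordless E cs" unfolding chordless_def
  proof (intro ballI impI)
    fix x y assume xy: "x \<in> set cs" "y \<in> set cs" "{x,y} \<in> E"
    then have "{x,y} \<in> {e \<in> E. e \<subseteq> W}" using sW by blast
    then show "{x,y} \<in> cycle_edges cs" using c(3) xy unfolding chordless_def by blast
  qed
  then show False using chordalD[OF ch c1 c(2)] by blast
qed

lemma induced_noK5:
  assumes nk: "\<not> has_K_minor 5 V E" and s: "simple_graph V E" and W: "W \<subseteq> V"
  shows "\<not> has_K_minor 5 W {e \<in> E. e \<subseteq> W}"
proof
  assume h: "has_K_minor 5 W {e \<in> E. e \<subseteq> W}"
  have "minor_step\<^sup>*\<^sup>* (V, E) (W, {e \<in> E. e \<subseteq> W})" using induced_minor[OF s W] unfolding is_minor_def .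
  then have "has_K_minor 5 (fst (V, E)) (snd (V, E))" using minor_trans h by fastforce
  then show False using nk by simp
qed

lemma altvia:
  assumes cn: "connset E C" and xa: "xa \<in> C" and ya: "ya \<in> C" and x: "x \<notin> C" and y: "y \<notin> C"
    and ex: "{x,xa} \<in> E" and ey: "{ya,y} \<in> E"
  shows "(x,y) \<in> {(a,b). {a,b} \<in> E \<and> {a,b} \<noteq> {x,y}}\<^sup>*"
proof -
  let ?R = "{(a,b). {a,b} \<in> E \<and> {a,b} \<noteq> {x,y}}"
  have sub: "rel E C \<subseteq> ?R"
  proof
    fix p assume "p \<in> rel E C"
    then obtain u v where p: "p = (u,v)" "{u,v} \<in> E" "u \<in> C" "v \<in> C" unfolding rel_def by blast
    then have "{u,v} \<noteq> {x,y}" using x y by (metis doubleton_eq_iff)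
    then show "p \<in> ?R" using p by blast
  qed
  have "(xa, ya) \<in> (rel E C)\<^sup>*" using cn xa ya unfolding connset_def by blast
  then have m: "(xa, ya) \<in> ?R\<^sup>*" using rtrancl_mono[OF sub] by blast
  have "{x,xa} \<noteq> {x,y}" using xa y by (metis doubleton_eq_iff)
  then have s1: "(x, xa) \<in> ?R" using ex by blast
  have "{ya,y} \<noteq> {x,y}" using ya x by (metis doubleton_eq_iff)
  then have s2: "(ya, y) \<in> ?R" using ey by blast
  show ?thesis using s1 m s2 by (meson converse_rtrancl_into_rtrancl rtrancl.rtrancl_into_rtrancl)
qed

lemma piece_bridgeless:
  assumes s: "simple_graph V E" and ch: "chordal V E" and br: "bridgeless V E"
    and W: "W \<subseteq> V" and C: "C \<subseteq> W" and cn: "connset E C"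
    and H: "\<And>x z. x \<in> W \<Longrightarrow> {x,z} \<in> E \<Longrightarrow> z \<notin> W \<Longrightarrow> x \<notin> C \<and> (\<exists>w\<in>C. {w,x} \<in> E)"
  shows "bridgeless W {e \<in> E. e \<subseteq> W}"
  unfolding bridgeless_def is_bridge_def
proof (intro ballI notI)
  let ?EW = "{e \<in> E. e \<subseteq> W}"
  have sW: "simple_graph W ?EW" using induced_simple[OF s W] .
  fix e assume e: "e \<in> ?EW" and nb: "e \<in> ?EW \<and> \<not> (\<exists>cs. is_cycle W ?EW cs \<and> e \<in> cycle_edges cs)"
  obtain x y where xy: "x \<in> W" "y \<in> W" "x \<noteq> y" "e = {x,y}" using simple_edgeE[OF sW e] by blast
  have eE: "{x,y} \<in> E" using e xy by blast
  obtain z where z: "{x,z} \<in> E" "{y,z} \<in> E" "z \<noteq> x" "z \<noteq> y" using bridgeless_tri[OF s ch br eE] by blast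
  show False
  proof (cases "z \<in> W")
    case True
    have "{x,y} \<in> ?EW" "{x,z} \<in> ?EW" "{y,z} \<in> ?EW" using eE z xy True by auto
    then show False using tri_cycle[OF sW _ _ _ z(3,4)] nb xy by blast
  next
    case False
    obtain xa where xa: "xa \<in> C" "{xa,x} \<in> E" "x \<notin> C" using H[OF xy(1) z(1) False] by blast
    obtain ya where ya: "ya \<in> C" "{ya,y} \<in> E" "y \<notin> C" using H[OF xy(2) z(2) False] by blast
    have cnW: "connset ?EW C"
      unfolding connset_def
    proof (intro ballI)
      fix u v assume "u \<in> C" "v \<in> C"
      then have "(u,v) \<in> (rel E C)\<^sup>*" using cn unfolding connset_def by blast
      moreover have "rel E C = rel ?EW C" using C unfolding rel_def by blast
      ultimately show "(u,v) \<in> (rel ?EW C)\<^sup>*" by simp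
    qed
    have e1: "{x,xa} \<in> ?EW" using xa C xy by (auto simp: insert_commute)
    have e2: "{ya,y} \<in> ?EW" using ya C xy by auto
    have "(x,y) \<in> {(a,b). {a,b} \<in> ?EW \<and> {a,b} \<noteq> {x,y}}\<^sup>*"
      using altvia[OF cnW xa(1) ya(1) xa(3) ya(3) e1 e2] .
    then have "\<exists>cs. is_cycle W ?EW cs \<and> {x,y} \<in> cycle_edges cs"
      using altpath(1)[OF sW] e xy by blast
    then show False using nb xy by blast
  qed
qed


definition RS :: "'a set set \<Rightarrow> 'a set \<Rightarrow> ('a \<times> 'a) set" where
  "RS E S = {(x,y). {x,y} \<in> E \<and> x \<notin> S \<and> y \<notin> S}"

definition cmp :: "'a set set \<Rightarrow> 'a set \<Rightarrow> 'a \<Rightarrow> 'a set" where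
  "cmp E S a = {z. (a,z) \<in> (RS E S)\<^sup>*}"

lemma RS_sym: "(x,y) \<in> RS E S \<Longrightarrow> (y,x) \<in> RS E S"
  unfolding RS_def by (auto simp: insert_commute)

lemma RS_rt_sym: assumes "(x,y) \<in> (RS E S)\<^sup>*" shows "(y,x) \<in> (RS E S)\<^sup>*"
proof -
  have "\<And>a b. (a,b) \<in> RS E S \<Longrightarrow> (b,a) \<in> RS E S" by (rule RS_sym)
  then show ?thesis using assms by (rule sym_rt)
qed

lemma comp_notS: assumes "a \<notin> S" "z \<in> cmp E S a" shows "z \<notin> S"
proof -
  have "(a,z) \<in> (RS E S)\<^sup>*" using assms(2) unfolding cmp_def by blast
  then show ?thesis
  proof (cases rule: rtranclE)
    case base then show ?thesis using assms(1) by simp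
  next
    case (step y) then show ?thesis unfolding RS_def by blast
  qed
qed

lemma comp_self: "a \<in> cmp E S a"
  unfolding cmp_def by simp

lemma comp_closed:
  assumes "a \<notin> S" "w \<in> cmp E S a" "{w,z} \<in> E" "z \<notin> S"
  shows "z \<in> cmp E S a"
proof -
  have "w \<notin> S" using comp_notS[OF assms(1,2)] .
  then have "(w,z) \<in> RS E S" using assms(3,4) unfolding RS_def by blast
  then show ?thesis using assms(2) unfolding cmp_def by (meson mem_Collect_eq rtrancl.rtrancl_into_rtrancl)
qed

lemma comp_V:
  assumes "simple_graph V E" "a \<in> V" "z \<in> cmp E S a" shows "z \<in> V"
proof -
  have eo: "edges_ok V E" using assms(1) by (rule simple_edges_ok)
  have "(a,z) \<in> (RS E S)\<^sup>*" using assms(3) unfolding cmp_def by blast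
  then show ?thesis
  proof (cases rule: rtranclE)
    case base then show ?thesis using assms(2) by simp
  next
    case (step y)
    then have "{y,z} \<in> E" unfolding RS_def by blast
    from edges_okD[OF eo this] show ?thesis by simp
  qed
qed

lemma comp_conn:
  assumes "a \<notin> S" shows "connset E (cmp E S a)"
proof -
  let ?C = "cmp E S a"
  have fw: "(a,z) \<in> (rel E ?C)\<^sup>*" if "(a,z) \<in> (RS E S)\<^sup>*" for z
    using that
  proof (induction rule: rtrancl_induct)
    case base then show ?case by simp
  next
    case (step y z)
    have "y \<in> ?C" "z \<in> ?C" using step(1,2) unfolding cmp_def by (auto intro: rtrancl.rtrancl_into_rtrancl)
    moreover have "{y,z} \<in> E" using step(2) unfolding RS_def by blast
    ultimately have "(y,z) \<in> rel E ?C" unfolding rel_def by blast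
    then show ?case using step(3) by (meson rtrancl.rtrancl_into_rtrancl)
  qed
  have symr: "(v,u) \<in> rel E ?C" if "(u,v) \<in> rel E ?C" for u v using that unfolding rel_def by (auto simp: insert_commute)
  show ?thesis unfolding connset_def
  proof (intro ballI)
    fix u v assume "u \<in> ?C" "v \<in> ?C"
    then have "(a,u) \<in> (rel E ?C)\<^sup>*" "(a,v) \<in> (rel E ?C)\<^sup>*" using fw unfolding cmp_def by blast+
    then have "(u,a) \<in> (rel E ?C)\<^sup>*" "(a,v) \<in> (rel E ?C)\<^sup>*" using sym_rt[OF symr] by blast+
    then show "(u,v) \<in> (rel E ?C)\<^sup>*" by (meson rtrancl_trans)
  qed
qed

lemma comp_disj:
  assumes "(a,b) \<notin> (RS E S)\<^sup>*" shows "cmp E S a \<inter> cmp E S b = {}"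
proof (rule ccontr)
  assume "cmp E S a \<inter> cmp E S b \<noteq> {}"
  then obtain z where h1: "(a,z) \<in> (RS E S)\<^sup>*" and h2: "(b,z) \<in> (RS E S)\<^sup>*" unfolding cmp_def by blast
  have "(z,b) \<in> (RS E S)\<^sup>*" using RS_rt_sym[OF h2] .
  then show False using assms h1 by (meson rtrancl_trans)
qed

lemma comp_nbr:
  assumes nab: "(a,b) \<notin> (RS E S)\<^sup>*" and ab': "(a,b) \<in> (RS E (S - {s}))\<^sup>*" and s: "s \<in> S" and a: "a \<notin> S"
  shows "\<exists>w\<in>cmp E S a. {w,s} \<in> E"
proof -
  have "z \<in> cmp E S a \<or> (\<exists>w\<in>cmp E S a. {w,s} \<in> E)" if "(a,z) \<in> (RS E (S - {s}))\<^sup>*" for z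
    using that
  proof (induction rule: rtrancl_induct)
    case base then show ?case by (rule disjI1, rule comp_self)
  next
    case (step y z)
    have e: "{y,z} \<in> E" "z \<notin> S - {s}" using step(2) unfolding RS_def by auto
    from step(3) show ?case
    proof
      assume y: "y \<in> cmp E S a"
      show ?thesis
      proof (cases "z = s")
        case True then show ?thesis using y e by blast
      next
        case False
        then have "z \<notin> S" using e by blast
        then show ?thesis using comp_closed[OF a y e(1)] by blast
      qed
    qed blast
  qed
  from this[OF ab'] show ?thesis using nab unfolding cmp_def by blast
qed

lemma bridge_path:
  assumes cn: "connset E C" "xa \<in> C" "ya \<in> C" "{x,xa} \<in> E" "{ya,y} \<in> E"
  shows "(x,y) \<in> (rel E (C \<union> {x,y}))\<^sup>*"
proof -
  have "(xa,ya) \<in> (rel E C)\<^sup>*" using cn unfolding connset_def by blast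
  moreover have "rel E C \<subseteq> rel E (C \<union> {x,y})" by (rule rel_mono) auto
  ultimately have m: "(xa,ya) \<in> (rel E (C \<union> {x,y}))\<^sup>*" using rtrancl_mono by blast
  have "(x,xa) \<in> rel E (C \<union> {x,y})" "(ya,y) \<in> rel E (C \<union> {x,y})" using cn unfolding rel_def by auto
  then show ?thesis using m by (meson converse_rtrancl_into_rtrancl rtrancl.rtrancl_into_rtrancl)
qed


lemma complete_case:
  assumes s: "simple_graph V E" and c2: "card V \<ge> 2" and br: "bridgeless V E"
    and nk: "\<not> has_K_minor 5 V E" and cp: "\<forall>u\<in>V. \<forall>v\<in>V. u \<noteq> v \<longrightarrow> {u,v} \<in> E"
  shows "k34_sum V E"
proof -
  have f: "finite V" using s unfolding simple_graph_def by blast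
  have cl: "is_clique V E V" using cp unfolding is_clique_def by blast
  have le4: "card V \<le> 4"
  proof (rule ccontr)
    assume "\<not> card V \<le> 4"
    then have "5 \<le> card V" by simp
    then obtain W where W: "W \<subseteq> V" "card W = 5" by (meson obtain_subset_with_card_n)
    have "is_clique V E W" using cl W(1) unfolding is_clique_def by blast
    then show False using clique5[OF s W] nk by blast
  qed
  have ge3: "card V \<ge> 3"
  proof (rule ccontr)
    assume "\<not> card V \<ge> 3"
    then have c: "card V = 2" using c2 by simp
    then obtain u v where uv: "u \<in> V" "v \<in> V" "u \<noteq> v" by (metis card_2_iff insertI1 insert_commute)
    then have "{u,v} \<in> E" using cp by blast
    then obtain cs where cs: "is_cycle V E cs" using br unfolding bridgeless_def is_bridge_def by blast
    then have h: "length cs = card (set cs)" "set cs \<subseteq> V" "3 \<le> length cs" unfolding is_cycle_def by (auto simp: distinct_card)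
    have "card (set cs) \<le> card V" using card_mono[OF f h(2)] .
    then have "3 \<le> card V" using h(1,3) by linarith
    then show False using c by simp
  qed
  have cg: "complete_graph V E" unfolding complete_graph_def
  proof
    show "E \<subseteq> {{u, v} |u v. u \<in> V \<and> v \<in> V \<and> u \<noteq> v}"
    proof
      fix e assume "e \<in> E"
      from simple_edgeE[OF s this] show "e \<in> {{u, v} |u v. u \<in> V \<and> v \<in> V \<and> u \<noteq> v}" by blast
    qed
    show "{{u, v} |u v. u \<in> V \<and> v \<in> V \<and> u \<noteq> v} \<subseteq> E" using cp by blast
  qed
  have "card V \<in> {3,4}" using le4 ge3 by auto
  then show ?thesis using k34_sum.base[OF f _ cg] by blast
qed

lemma minsep:
  assumes s: "simple_graph V E" and ab: "a \<in> V" "b \<in> V" "a \<noteq> b" "{a,b} \<notin> E"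
  obtains S where "S \<subseteq> V - {a,b}" "(a,b) \<notin> (RS E S)\<^sup>*" "\<And>s. s \<in> S \<Longrightarrow> (a,b) \<in> (RS E (S - {s}))\<^sup>*"
proof -
  have f: "finite V" using s unfolding simple_graph_def by blast
  have eo: "edges_ok V E" using s by (rule simple_edges_ok)
  define P where "P k = (\<exists>S. S \<subseteq> V - {a,b} \<and> (a,b) \<notin> (RS E S)\<^sup>* \<and> card S = k)" for k
  have z: "z = a" if "(a,z) \<in> (RS E (V - {a,b}))\<^sup>*" for z
    using that
  proof (induction rule: rtrancl_induct)
    case base then show ?case by simp
  next
    case (step y z)
    then have e: "{a,z} \<in> E" "z \<notin> V - {a,b}" unfolding RS_def by auto
    have "z \<in> V" using edges_okD[OF eo e(1)] by blast
    then have "z = a \<or> z = b" using e(2) by blast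
    then show ?case using e(1) ab(4) by auto
  qed
  have "P (card (V - {a,b}))" unfolding P_def using z ab(3) by blast
  then obtain k where k: "P k" "\<And>m. m < k \<Longrightarrow> \<not> P m" using exists_least_iff[of P] by blast
  then obtain S where S: "S \<subseteq> V - {a,b}" "(a,b) \<notin> (RS E S)\<^sup>*" "card S = k" unfolding P_def by blast
  have fS: "finite S" using finite_subset[OF S(1)] f by blast
  have "(a,b) \<in> (RS E (S - {s}))\<^sup>*" if "s \<in> S" for s
  proof (rule ccontr)
    assume "(a,b) \<notin> (RS E (S - {s}))\<^sup>*"
    moreover have "S - {s} \<subseteq> V - {a,b}" using S(1) by blast
    moreover have "card (S - {s}) < k" using card_Diff1_less[OF fS that] S(3) by simp
    ultimately show False using k(2) unfolding P_def by blast
  qed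
  then show ?thesis using that S(1,2) by blast
qed


lemma split_case:
  fixes V :: "'a set"
  assumes s: "simple_graph V E" and cn: "connected_graph V E" and br: "bridgeless V E"
    and ch: "chordal V E" and nk: "\<not> has_K_minor 5 V E"
    and ab: "a \<in> V" "b \<in> V" "a \<noteq> b" "{a,b} \<notin> E"
    and IH: "\<And>(V'::'a set) E'. card V' < card V \<Longrightarrow> simple_graph V' E' \<Longrightarrow> connected_graph V' E' \<Longrightarrow> 2 \<le> card V'
      \<Longrightarrow> bridgeless V' E' \<Longrightarrow> chordal V' E' \<Longrightarrow> \<not> has_K_minor 5 V' E' \<Longrightarrow> k34_sum V' E'"
  shows "k34_sum V E"
proof -
  have f: "finite V" using s unfolding simple_graph_def by blast
  have eo: "edges_ok V E" using s by (rule simple_edges_ok)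
  obtain S where S: "S \<subseteq> V - {a,b}" and nsep: "(a,b) \<notin> (RS E S)\<^sup>*"
    and mins: "\<And>s. s \<in> S \<Longrightarrow> (a,b) \<in> (RS E (S - {s}))\<^sup>*"
    using minsep[OF s ab] by blast
  have aS: "a \<notin> S" and bS: "b \<notin> S" using S by auto
  have fS: "finite S" using finite_subset[OF _ f] S by blast
  define Ca where "Ca = cmp E S a"
  define Cb where "Cb = cmp E S b"
  have nsep': "(b,a) \<notin> (RS E S)\<^sup>*"
  proof
    assume "(b,a) \<in> (RS E S)\<^sup>*"
    from RS_rt_sym[OF this] nsep show False by simp
  qed
  have nbA: "\<exists>w\<in>Ca. {w,s} \<in> E" if "s \<in> S" for s
    unfolding Ca_def using comp_nbr[OF nsep mins[OF that] that aS] .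
  have nbB: "\<exists>w\<in>Cb. {w,s} \<in> E" if "s \<in> S" for s
  proof -
    have "(b,a) \<in> (RS E (S - {s}))\<^sup>*" using RS_rt_sym[OF mins[OF that]] .
    then show ?thesis unfolding Cb_def using comp_nbr[OF nsep' _ that bS] by simp
  qed
  have CaS: "x \<notin> S" if "x \<in> Ca" for x using comp_notS[OF aS] that unfolding Ca_def by blast
  have CbS: "x \<notin> S" if "x \<in> Cb" for x using comp_notS[OF bS] that unfolding Cb_def by blast
  have CaV: "Ca \<subseteq> V" using comp_V[OF s ab(1)] unfolding Ca_def by blast
  have CbV: "Cb \<subseteq> V" using comp_V[OF s ab(2)] unfolding Cb_def by blast
  have dAB: "Ca \<inter> Cb = {}" using comp_disj[OF nsep] unfolding Ca_def Cb_def .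
  have clA: "z \<in> Ca" if "w \<in> Ca" "{w,z} \<in> E" "z \<notin> S" for w z
    using comp_closed[OF aS] that unfolding Ca_def by blast
  have connA: "connset E Ca" unfolding Ca_def using comp_conn[OF aS] .
  have connB: "connset E Cb" unfolding Cb_def using comp_conn[OF bS] .
  have aCa: "a \<in> Ca" unfolding Ca_def by (rule comp_self)
  have bCb: "b \<in> Cb" unfolding Cb_def by (rule comp_self)
  have bnCa: "b \<notin> Ca" using dAB bCb by blast
  have SV: "S \<subseteq> V" using S by blast
  have Sne: "S \<noteq> {}"
  proof
    assume "S = {}"
    then have "RS E S = {(x,y). {x,y} \<in> E}" unfolding RS_def by simp
    then show False using cn ab nsep unfolding connected_graph_def by auto
  qed
  have Scl: "is_clique V E S" unfolding is_clique_def
  proof (intro conjI ballI impI)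
    show "S \<subseteq> V" by (rule SV)
    fix x y assume xy: "x \<in> S" "y \<in> S" "x \<noteq> y"
    show "{x,y} \<in> E"
    proof (rule ccontr)
      assume ne: "{x,y} \<notin> E"
      have xA: "x \<notin> Ca" "y \<notin> Ca" using xy CaS by blast+
      have xB: "x \<notin> Cb" "y \<notin> Cb" using xy CbS by blast+
      have noe: "{u,v} \<notin> E" if "u \<in> Ca" "v \<in> Cb" for u v
      proof
        assume "{u,v} \<in> E"
        then have "v \<in> Ca" using clA[OF that(1)] CbS[OF that(2)] by blast
        then show False using that(2) dAB by blast
      qed
      obtain xa where xa: "xa \<in> Ca" "{xa,x} \<in> E" using nbA[OF xy(1)] by blast
      obtain ya where ya: "ya \<in> Ca" "{ya,y} \<in> E" using nbA[OF xy(2)] by blast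
      obtain xb where xb: "xb \<in> Cb" "{xb,x} \<in> E" using nbB[OF xy(1)] by blast
      obtain yb where yb: "yb \<in> Cb" "{yb,y} \<in> E" using nbB[OF xy(2)] by blast
      have e1: "{x,xa} \<in> E" "{x,xb} \<in> E" using xa xb by (simp_all add: insert_commute)
      have pA: "(x,y) \<in> (rel E (Ca \<union> {x,y}))\<^sup>*" using bridge_path[OF connA xa(1) ya(1) e1(1) ya(2)] .
      have pB: "(x,y) \<in> (rel E (Cb \<union> {x,y}))\<^sup>*" using bridge_path[OF connB xb(1) yb(1) e1(2) yb(2)] .
      show False using dirac_core[OF s ch xy(3) ne dAB xA xB noe pA pB] .
    qed
  qed
  have cS: "card S \<le> 3"
  proof (rule ccontr)
    assume "\<not> card S \<le> 3"
    then have "4 \<le> card S" by simp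
    then obtain W where W: "W \<subseteq> S" "card W = 4" by (meson obtain_subset_with_card_n)
    have WV: "W \<subseteq> V" using W SV by blast
    have Wcl: "is_clique V E W" using Scl W(1) unfolding is_clique_def by blast
    have "Ca \<noteq> {}" using aCa by blast
    moreover have "Ca \<inter> W = {}" using W(1) CaS by blast
    moreover have "\<forall>s\<in>W. \<exists>z\<in>Ca. {s,z} \<in> E"
    proof
      fix s assume "s \<in> W"
      then obtain z where "z \<in> Ca" "{z,s} \<in> E" using nbA W(1) by blast
      then show "\<exists>z\<in>Ca. {s,z} \<in> E" by (auto simp: insert_commute)
    qed
    ultimately have "has_K_minor 5 V E" using contract_K5[OF s WV W(2) Wcl CaV _ _ connA] by blast
    then show False using nk by blast
  qed
  have cS1: "card S \<in> {1,2,3}" using cS Sne fS by (cases "card S") auto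
  define V1 where "V1 = Ca \<union> S"
  define V2 where "V2 = V - Ca"
  define E1 where "E1 = {e \<in> E. e \<subseteq> V1}"
  define E2 where "E2 = {e \<in> E. e \<subseteq> V2}"
  have V1V: "V1 \<subseteq> V" unfolding V1_def using CaV SV by blast
  have V2V: "V2 \<subseteq> V" unfolding V2_def by blast
  have V12: "V1 \<inter> V2 = S" unfolding V1_def V2_def using CaS SV by blast
  have V12u: "V1 \<union> V2 = V" unfolding V1_def V2_def using CaV SV by blast
  have E12u: "E1 \<union> E2 = E"
  proof
    show "E1 \<union> E2 \<subseteq> E" unfolding E1_def E2_def by blast
    show "E \<subseteq> E1 \<union> E2"
    proof
      fix e assume e: "e \<in> E"
      obtain u v where uv: "u \<in> V" "v \<in> V" "e = {u,v}" using simple_edgeE[OF s e] by blast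
      have ev: "{u,v} \<in> E" "{v,u} \<in> E" using e uv by (auto simp: insert_commute)
      show "e \<in> E1 \<union> E2"
      proof (cases "u \<in> Ca \<or> v \<in> Ca")
        case True
        have "u \<in> V1" "v \<in> V1"
        proof -
          show "u \<in> V1"
          proof (cases "u \<in> Ca")
            case True then show ?thesis unfolding V1_def by blast
          next
            case False then have "v \<in> Ca" using \<open>u \<in> Ca \<or> v \<in> Ca\<close> by blast
            then show ?thesis using clA[OF _ ev(2)] unfolding V1_def by blast
          qed
          show "v \<in> V1"
          proof (cases "v \<in> Ca")
            case True then show ?thesis unfolding V1_def by blast
          next
            case False then have "u \<in> Ca" using \<open>u \<in> Ca \<or> v \<in> Ca\<close> by blast
            then show ?thesis using clA[OF _ ev(1)] unfolding V1_def by blast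
          qed
        qed
        then show ?thesis using e uv unfolding E1_def by blast
      next
        case False
        then have "e \<subseteq> V2" using uv unfolding V2_def by blast
        then show ?thesis using e unfolding E2_def by blast
      qed
    qed
  qed
  have s1: "simple_graph V1 E1" unfolding E1_def using induced_simple[OF s V1V] .
  have s2: "simple_graph V2 E2" unfolding E2_def using induced_simple[OF s V2V] .
  have "is_clique V1 E1 S" using Scl unfolding is_clique_def E1_def V1_def by blast
  then have cl1: "is_clique V1 E1 (V1 \<inter> V2)" using V12 by simp
  have SV2: "S \<subseteq> V2" unfolding V2_def using SV CaS by blast
  have "is_clique V2 E2 S" using Scl SV2 unfolding is_clique_def E2_def by blast
  then have cl2: "is_clique V2 E2 (V1 \<inter> V2)" using V12 by simp
  obtain s0 where s0: "s0 \<in> S" using Sne by blast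
  have lt1: "card V1 < card V" using psubset_card_mono[OF f] V1V bnCa bS ab(2) unfolding V1_def by blast
  have lt2: "card V2 < card V" using psubset_card_mono[OF f] V2V aCa ab(1) unfolding V2_def by blast
  have fV1: "finite V1" using finite_subset[OF V1V f] .
  have fV2: "finite V2" using finite_subset[OF V2V f] .
  have as0: "a \<noteq> s0" using aS s0 by blast
  have bs0: "b \<noteq> s0" using bS s0 by blast
  have ge1: "2 \<le> card V1"
  proof -
    have "{a, s0} \<subseteq> V1" using aCa s0 unfolding V1_def by blast
    then have "card {a, s0} \<le> card V1" using card_mono[OF fV1] by blast
    then show ?thesis using as0 by simp
  qed
  have ge2: "2 \<le> card V2"
  proof -
    have "{b, s0} \<subseteq> V2" using bnCa ab(2) SV2 s0 unfolding V2_def by blast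
    then have "card {b, s0} \<le> card V2" using card_mono[OF fV2] by blast
    then show ?thesis using bs0 by simp
  qed
  let ?R1 = "{(x,y). {x,y} \<in> E1}"
  let ?R2 = "{(x,y). {x,y} \<in> E2}"
  have sym1: "(y,x) \<in> ?R1" if "(x,y) \<in> ?R1" for x y using that by (auto simp: insert_commute)
  have sym2: "(y,x) \<in> ?R2" if "(x,y) \<in> ?R2" for x y using that by (auto simp: insert_commute)
  have reachA: "(a,z) \<in> ?R1\<^sup>*" if "z \<in> V1" for z
  proof -
    have sub: "rel E Ca \<subseteq> ?R1" unfolding rel_def E1_def V1_def by blast
    have ca: "(a,w) \<in> ?R1\<^sup>*" if "w \<in> Ca" for w
    proof -
      have "(a,w) \<in> (rel E Ca)\<^sup>*" using connA aCa that unfolding connset_def by blast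
      then show ?thesis using rtrancl_mono[OF sub] by blast
    qed
    show ?thesis
    proof (cases "z \<in> Ca")
      case True then show ?thesis using ca by blast
    next
      case False
      then have zS: "z \<in> S" using that unfolding V1_def by blast
      obtain w where w: "w \<in> Ca" "{w,z} \<in> E" using nbA[OF zS] by blast
      have "(w,z) \<in> ?R1" using w zS unfolding E1_def V1_def by blast
      then show ?thesis using ca[OF w(1)] by (meson rtrancl.rtrancl_into_rtrancl)
    qed
  qed
  have con1: "connected_graph V1 E1" unfolding connected_graph_def
  proof (intro conjI ballI)
    show "V1 \<noteq> {}" using aCa unfolding V1_def by blast
    fix u v assume uv: "u \<in> V1" "v \<in> V1"
    have "(u,a) \<in> ?R1\<^sup>*" using sym_rt[OF sym1 reachA[OF uv(1)]] .
    moreover have "(a,v) \<in> ?R1\<^sup>*" using reachA[OF uv(2)] .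
    ultimately show "(u,v) \<in> ?R1\<^sup>*" by (meson rtrancl_trans)
  qed
  have reachS: "(z,s0) \<in> ?R2\<^sup>*" if zV2: "z \<in> V2" for z
  proof -
    have claim: "(t \<in> V2 \<and> (z,t) \<in> ?R2\<^sup>*) \<or> (\<exists>s\<in>S. (z,s) \<in> ?R2\<^sup>*)" if zt: "(z,t) \<in> {(x,y). {x,y} \<in> E}\<^sup>*" for t
      using zt
    proof (induction rule: rtrancl_induct)
      case base then show ?case using zV2 by simp
    next
      case (step t t')
      have e: "{t,t'} \<in> E" using step(2) by simp
      have tV: "t \<in> V" "t' \<in> V" using edges_okD[OF eo e] by auto
      from step(3) show ?case
      proof
        assume A: "t \<in> V2 \<and> (z,t) \<in> ?R2\<^sup>*"
        show ?thesis
        proof (cases "t' \<in> V2")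
          case True
          then have "(t,t') \<in> ?R2" using A e unfolding E2_def by blast
          then show ?thesis using A True by (meson rtrancl.rtrancl_into_rtrancl)
        next
          case False
          then have "t' \<in> Ca" using tV unfolding V2_def by blast
          moreover have "{t',t} \<in> E" using e by (simp add: insert_commute)
          ultimately have "t \<in> S" using clA A unfolding V2_def by blast
          then show ?thesis using A by blast
        qed
      qed blast
    qed
    have za: "(z,a) \<in> {(x,y). {x,y} \<in> E}\<^sup>*" using cn zV2 V2V ab(1) unfolding connected_graph_def by blast
    have "a \<notin> V2" using aCa unfolding V2_def by blast
    then obtain s where s: "s \<in> S" "(z,s) \<in> ?R2\<^sup>*" using claim[OF za] by blast
    show ?thesis
    proof (cases "s = s0")
      case True then show ?thesis using s by simp
    next
      case False
      then have "{s,s0} \<in> E" using Scl s s0 unfolding is_clique_def by blast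
      then have "(s,s0) \<in> ?R2" using s s0 SV2 unfolding E2_def by blast
      then show ?thesis using s(2) by (meson rtrancl.rtrancl_into_rtrancl)
    qed
  qed
  have con2: "connected_graph V2 E2" unfolding connected_graph_def
  proof (intro conjI ballI)
    show "V2 \<noteq> {}" using SV2 s0 by blast
    fix u v assume uv: "u \<in> V2" "v \<in> V2"
    have "(u,s0) \<in> ?R2\<^sup>*" using reachS[OF uv(1)] .
    moreover have "(s0,v) \<in> ?R2\<^sup>*" using sym_rt[OF sym2 reachS[OF uv(2)]] .
    ultimately show "(u,v) \<in> ?R2\<^sup>*" by (meson rtrancl_trans)
  qed
  have CaV1: "Ca \<subseteq> V1" unfolding V1_def by blast
  have CbV2: "Cb \<subseteq> V2" unfolding V2_def using CbV dAB by blast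
  have br1: "bridgeless V1 E1" unfolding E1_def
  proof (rule piece_bridgeless[OF s ch br V1V CaV1 connA])
    fix x z assume h: "x \<in> V1" "{x,z} \<in> E" "z \<notin> V1"
    have "x \<notin> Ca"
    proof
      assume "x \<in> Ca"
      then have "z \<in> Ca" using clA h(2) h(3) unfolding V1_def by blast
      then show False using h(3) unfolding V1_def by blast
    qed
    then have "x \<in> S" using h(1) unfolding V1_def by blast
    then show "x \<notin> Ca \<and> (\<exists>w\<in>Ca. {w,x} \<in> E)" using \<open>x \<notin> Ca\<close> nbA by blast
  qed
  have br2: "bridgeless V2 E2" unfolding E2_def
  proof (rule piece_bridgeless[OF s ch br V2V CbV2 connB])
    fix x z assume h: "x \<in> V2" "{x,z} \<in> E" "z \<notin> V2"
    have "z \<in> V" using edges_okD[OF eo h(2)] by blast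
    then have zCa: "z \<in> Ca" using h(3) unfolding V2_def by blast
    have "x \<in> S"
    proof (rule ccontr)
      assume "x \<notin> S"
      moreover have "{z,x} \<in> E" using h(2) by (simp add: insert_commute)
      ultimately have "x \<in> Ca" using clA zCa by blast
      then show False using h(1) unfolding V2_def by blast
    qed
    then show "x \<notin> Cb \<and> (\<exists>w\<in>Cb. {w,x} \<in> E)" using CbS nbB by blast
  qed
  have ch1: "chordal V1 E1" using induced_chordal[OF ch V1V] unfolding E1_def .
  have nk1: "\<not> has_K_minor 5 V1 E1" using induced_noK5[OF nk s V1V] unfolding E1_def .
  have ch2: "chordal V2 E2" using induced_chordal[OF ch V2V] unfolding E2_def .
  have nk2: "\<not> has_K_minor 5 V2 E2" using induced_noK5[OF nk s V2V] unfolding E2_def .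
  have k1: "k34_sum V1 E1" using IH[of V1 E1] lt1 s1 con1 ge1 br1 ch1 nk1 by blast
  have k2: "k34_sum V2 E2" using IH[of V2 E2] lt2 s2 con2 ge2 br2 ch2 nk2 by blast
  have "k34_sum (V1 \<union> V2) (E1 \<union> E2)"
    using k34_sum.csum[OF k1 k2 cl1 cl2] cS1 V12 by blast
  then show ?thesis using V12u E12u by simp
qed


lemma fwd:
  fixes V :: "'a set"
  shows "simple_graph V E \<Longrightarrow> connected_graph V E \<Longrightarrow> 2 \<le> card V \<Longrightarrow> bridgeless V E
    \<Longrightarrow> chordal V E \<Longrightarrow> \<not> has_K_minor 5 V E \<Longrightarrow> k34_sum V E"
proof (induction "card V" arbitrary: V E rule: less_induct)
  case less
  show ?case
  proof (cases "\<forall>u\<in>V. \<forall>v\<in>V. u \<noteq> v \<longrightarrow> {u,v} \<in> E")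
    case True
    then show ?thesis using complete_case[OF less.prems(1) less.prems(3) less.prems(4) less.prems(6)] by blast
  next
    case False
    then obtain a b where ab: "a \<in> V" "b \<in> V" "a \<noteq> b" "{a,b} \<notin> E" by blast
    show ?thesis
    proof (rule split_case[OF less.prems(1,2,4,5,6) ab])
      fix V' :: "'a set" and E'
      assume "card V' < card V" "simple_graph V' E'" "connected_graph V' E'" "2 \<le> card V'"
        "bridgeless V' E'" "chordal V' E'" "\<not> has_K_minor 5 V' E'"
      then show "k34_sum V' E'" using less.hyps by blast
    qed
  qed
qed

theorem proposition3p5:
  fixes V :: "'a set" and E :: "'a set set"
  assumes "simple_graph V E" and "connected_graph V E" and "card V \<ge> 2"
  shows "(bridgeless V E \<and> chordal V E \<and> \<not> has_K_minor 5 V E) \<longleftrightarrow> k34_sum V E"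
proof
  assume h: "bridgeless V E \<and> chordal V E \<and> \<not> has_K_minor 5 V E"
  show "k34_sum V E" using fwd[OF assms] h by blast
next
  assume k: "k34_sum V E"
  have "bridgeless V E" using k34_bridgeless[OF k] .
  moreover have "chordal V E" using k34_chordal[OF k] .
  moreover have "\<not> has_K_minor 5 V E"
  proof
    assume "has_K_minor 5 V E"
    then have "model5 V E" using minor_model[OF k34_simple[OF k]] by blast
    then show False using k34_nomodel[OF k] by blast
  qed
  ultimately show "bridgeless V E \<and> chordal V E \<and> \<not> has_K_minor 5 V E" by blast
qed

end
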